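(* Let $\Gamma,\Delta$ be finitely generated groups acting continuously on compact metric spaces $Y$ and $X$ respectively, where $Y$ is connected, the action $\Gamma\curvearrowright Y$ has at least one free orbit, and the action $\Delta\curvearrowright X$ is free. Let $f:Y\to X$ be a continuous map inducing a quasi-isometry of warped cones, i.e. there are an index set $I$, maps $I\ni i\mapsto t_i\in(0,\infty)$ and $I\ni i\mapsto \tau_i\in(0,\infty)$ that are both surjective onto $(0,\infty)$, and constants $C\ge1$, $A\ge0$ such that for every $i\in I$ the map $f:(t_iY,d_\Gamma)\to(\tau_iX,d_\Delta)$ satisfies $C^{-1}d_\Gamma(y,y')-A\le d_\Delta(f(y),f(y'))\le Cd_\Gamma(y,y')+A$ for all $y,y'$ and the $A$-neighbourhood of $f(Y)$ in $(\tau_iX,d_\Delta)$ is all of $\tau_iX$. Let $\Delta'=\{\delta\in\Delta:\delta\,\mathrm{im}(f)=\mathrm{im}(f)\}$. Then: (1) $\Delta'$ has finite index in $\Delta$ and there is a short exact sequence $1\to F\to\Gamma\to\Delta'\to1$ with $F$ finite; (2) there is a homeomorphism $h:\mathrm{im}(f)\to Y/F$ such that the quotient map $q:Y\to Y/F$ equals $h\circ f$, and $h$ conjugates the actions $\Delta'\curvearrowright\mathrm{im}(f)$ and $\Gamma/F\curvearrowright Y/F$; (3) $\mathrm{im}(f)$ is one of $[\Delta:\Delta']$ many connected components of $X$, and $\Delta$ acts transitively on them. In particular, if $f$ is a homeomorphism, then $\Gamma$ and $\Delta$ are isomorphic and the actions are conjugate by $f$.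
   Context: $S$ is a fixed finite symmetric generating set of the group, $|\gamma|$ the word length. For a compact metric space $(Y,d)$ with an action of $\Gamma=\langle S\rangle$ and $t>0$, $tY$ denotes $Y$ with metric $td$ and $d_\Gamma$ is the largest metric on $tY$ with $d_\Gamma(y,y')\le t\,d(y,y')$ and $d_\Gamma(y,sy)\le1$ for all $y,y'\in Y$, $s\in S$ (the warped metric). A free orbit is an orbit $\Gamma y$ with trivial stabiliser of $y$. *)

theory Defs
  imports "HOL-Analysis.Analysis" "HOL-Algebra.Group_Action" "HOL-Algebra.Generated_Groups"
begin

definition fin_sym_gen_set :: "('g, 'b) monoid_scheme \<Rightarrow> 'g set \<Rightarrow> bool" where
  "fin_sym_gen_set G S \<longleftrightarrow> finite S \<and> S \<subseteq> carrier G \<and>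
     (\<forall>s\<in>S. inv\<^bsub>G\<^esub> s \<in> S) \<and> generate G S = carrier G"

definition continuous_action :: "('g, 'b) monoid_scheme \<Rightarrow> 'y metric \<Rightarrow> ('g \<Rightarrow> 'y \<Rightarrow> 'y) \<Rightarrow> bool" where
  "continuous_action G m \<phi> \<longleftrightarrow> group_action G (mspace m) \<phi> \<and>
     (\<forall>g\<in>carrier G. continuous_map (mtopology_of m) (mtopology_of m) (\<phi> g))"

text \<open>The warped metric d_Gamma on tY: the largest metric rho on Y with
  rho(y,y') \<le> t d(y,y') and rho(y, s y) \<le> 1 for all s in S (taken as the
  pointwise supremum of all such metrics).\<close>
definition warped_dist ::
  "'y metric \<Rightarrow> ('g \<Rightarrow> 'y \<Rightarrow> 'y) \<Rightarrow> 'g set \<Rightarrow> real \<Rightarrow> 'y \<Rightarrow> 'y \<Rightarrow> real" where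
  "warped_dist m \<phi> S t y y' = Sup {\<rho> y y' | \<rho>. Metric_space (mspace m) \<rho> \<and>
      (\<forall>x\<in>mspace m. \<forall>x'\<in>mspace m. \<rho> x x' \<le> t * mdist m x x') \<and>
      (\<forall>x\<in>mspace m. \<forall>s\<in>S. \<rho> x (\<phi> s x) \<le> 1)}"

definition free_point :: "('g, 'b) monoid_scheme \<Rightarrow> ('g \<Rightarrow> 'y \<Rightarrow> 'y) \<Rightarrow> 'y \<Rightarrow> bool" where
  "free_point G \<phi> y \<longleftrightarrow> (\<forall>g\<in>carrier G. \<phi> g y = y \<longrightarrow> g = \<one>\<^bsub>G\<^esub>)"

end

theory Submission
  imports Defs
begin



lemma finite_min_delta:
  fixes P :: "'a \<Rightarrow> real \<Rightarrow> bool"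
  assumes "finite A" and "\<And>a. a \<in> A \<Longrightarrow> \<exists>\<delta>>0. P a \<delta>"
    and mono: "\<And>a \<delta> \<delta>'. P a \<delta> \<Longrightarrow> 0 < \<delta>' \<Longrightarrow> \<delta>' \<le> \<delta> \<Longrightarrow> P a \<delta>'"
  shows "\<exists>\<delta>>0. \<forall>a\<in>A. P a \<delta>"
  using assms(1,2)
proof (induction A rule: finite_induct)
  case empty
  then show ?case by (intro exI[of _ 1]) simp
next
  case (insert a A)
  then obtain \<delta>1 where d1: "\<delta>1 > 0" "\<forall>b\<in>A. P b \<delta>1" by blast
  obtain \<delta>2 where d2: "\<delta>2 > 0" "P a \<delta>2" using insert by blast
  have "\<forall>b\<in>insert a A. P b (min \<delta>1 \<delta>2)"
  proof
    fix b assume "b \<in> insert a A"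
    then show "P b (min \<delta>1 \<delta>2)"
    proof
      assume "b = a"
      then show ?thesis using mono[OF d2(2)] d1(1) d2(1) by simp
    next
      assume "b \<in> A"
      then show ?thesis using mono[OF d1(2)[rule_format, OF \<open>b \<in> A\<close>]] d1(1) d2(1) by simp
    qed
  qed
  then show ?case using d1 d2 by (intro exI[of _ "min \<delta>1 \<delta>2"]) simp
qed



lemma clopen_cover:
  assumes T: "connected_space T" and fin: "finite A" and cl: "\<And>a. a \<in> A \<Longrightarrow> closedin T (B a)"
    and dj: "\<And>a b. a \<in> A \<Longrightarrow> b \<in> A \<Longrightarrow> a \<noteq> b \<Longrightarrow> B a \<inter> B b = {}"
    and cov: "topspace T \<subseteq> \<Union>(B ` A)" and p: "p \<in> topspace T"
  shows "\<exists>a\<in>A. B a = topspace T"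
proof -
  obtain a where a: "a \<in> A" "p \<in> B a" using cov p by blast
  have sub: "\<And>a. a \<in> A \<Longrightarrow> B a \<subseteq> topspace T" using cl closedin_subset by blast
  have eq: "topspace T - B a = \<Union>(B ` (A - {a}))"
  proof
    show "topspace T - B a \<subseteq> \<Union>(B ` (A - {a}))" using cov by blast
    show "\<Union>(B ` (A - {a})) \<subseteq> topspace T - B a" using dj[OF a(1)] sub by blast
  qed
  have "closedin T (\<Union>(B ` (A - {a})))"
    by (rule closedin_Union) (use fin cl in auto)
  then have "openin T (B a)" using eq sub[OF a(1)]
    by (simp add: openin_closedin_eq)
  then have "B a = {} \<or> B a = topspace T" using T cl[OF a(1)] connected_space_clopen_in by blast
  then show ?thesis using a by blast
qed

lemma clopen_component:
  assumes c: "connectedin X C" and cl: "closedin X C" and op: "openin X C" and ne: "x \<in> C"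
  shows "C \<in> connected_components_of X"
proof -
  have xT: "x \<in> topspace X" using ne closedin_subset[OF cl] by blast
  define K where "K = connected_component_of_set X x"
  have K: "K \<in> connected_components_of X" unfolding K_def by (rule iffD2[OF connected_component_in_connected_components_of xT])
  have "C \<subseteq> K" unfolding K_def using connected_component_of_maximal[OF c ne] .
  moreover have "K \<subseteq> C \<or> disjnt K C"
    using connectedin_clopen_cases[OF connectedin_connected_components_of[OF K] cl op] .
  moreover have xK: "x \<in> K" unfolding K_def using xT by (simp add: connected_component_of_refl)
  moreover have "\<not> disjnt K C" using xK ne unfolding disjnt_def by blast
  ultimately have "K = C" by (meson subset_antisym)
  then show ?thesis using K by simp
qed

lemma card_eq_images:
  assumes H: "\<And>a b. a \<in> A \<Longrightarrow> b \<in> A \<Longrightarrow> f a = f b \<longleftrightarrow> g a = g b"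
  shows "card (f ` A) = card (g ` A) \<and> (finite (f ` A) \<longleftrightarrow> finite (g ` A))"
proof -
  define h where "h u = g (SOME a. a \<in> A \<and> f a = u)" for u
  have hf: "h (f a) = g a" if a: "a \<in> A" for a
  proof -
    have "\<exists>b. b \<in> A \<and> f b = f a" using a by blast
    then have "(SOME b. b \<in> A \<and> f b = f a) \<in> A \<and> f (SOME b. b \<in> A \<and> f b = f a) = f a" by (rule someI_ex)
    then show ?thesis unfolding h_def using H a by blast
  qed
  have "bij_betw h (f ` A) (g ` A)"
  proof (rule bij_betw_imageI)
    show "inj_on h (f ` A)"
    proof (rule inj_onI)
      fix u v assume "u \<in> f ` A" "v \<in> f ` A" "h u = h v"
      then obtain a b where "a \<in> A" "b \<in> A" "u = f a" "v = f b" "g a = g b" using hf by auto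
      then show "u = v" using H by blast
    qed
    show "h ` f ` A = g ` A" using hf by (auto simp: image_image)
  qed
  then show ?thesis using bij_betw_same_card bij_betw_finite by blast
qed

locale warp_sp = group G for G :: "'g monoid" (structure) +
  fixes m :: "'y metric" and \<phi> :: "'g \<Rightarrow> 'y \<Rightarrow> 'y" and S :: "'g set"
  assumes gen: "fin_sym_gen_set G S" and act: "continuous_action G m \<phi>"
begin

lemma ga: "group_action G (mspace m) \<phi>"
  using act by (simp add: continuous_action_def)

lemma contg: "g \<in> carrier G \<Longrightarrow> continuous_map (mtopology_of m) (mtopology_of m) (\<phi> g)"
  using act by (simp add: continuous_action_def)

lemma S_sub: "S \<subseteq> carrier G" and S_fin: "finite S" and S_inv: "s \<in> S \<Longrightarrow> inv s \<in> S"
  and S_gen: "generate G S = carrier G"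
  using gen by (auto simp: fin_sym_gen_set_def)

lemma img: "g \<in> carrier G \<Longrightarrow> x \<in> mspace m \<Longrightarrow> \<phi> g x \<in> mspace m"
  using group_action.element_image[OF ga] by blast

lemma comp: "g \<in> carrier G \<Longrightarrow> h \<in> carrier G \<Longrightarrow> x \<in> mspace m \<Longrightarrow> \<phi> (g \<otimes> h) x = \<phi> g (\<phi> h x)"
  using group_action.composition_rule[OF ga] by blast

lemma one: "x \<in> mspace m \<Longrightarrow> \<phi> \<one> x = x"
proof -
  assume x: "x \<in> mspace m"
  have "(\<lambda>x \<in> mspace m. x) = \<phi> \<one>" using group_action.id_eq_one[OF ga] .
  then show ?thesis using x by (metis restrict_apply')
qed

lemma invact: "g \<in> carrier G \<Longrightarrow> x \<in> mspace m \<Longrightarrow> \<phi> (inv g) (\<phi> g x) = x"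
  by (metis comp inv_closed l_inv one)

lemma invact2: "g \<in> carrier G \<Longrightarrow> x \<in> mspace m \<Longrightarrow> \<phi> g (\<phi> (inv g) x) = x"
  by (metis comp inv_closed r_inv one)

fun W :: "nat \<Rightarrow> 'g set" where
  "W 0 = {\<one>}"
| "W (Suc n) = (\<lambda>(s,w). s \<otimes> w) ` (S \<times> W n)"

definition Wle :: "nat \<Rightarrow> 'g set" where "Wle n = (\<Union>k\<le>n. W k)"

lemma W_fin: "finite (W n)"
  by (induction n) (auto simp: S_fin)

lemma Wle_fin: "finite (Wle n)"
  by (simp add: Wle_def W_fin)

lemma W_carrier: "W n \<subseteq> carrier G"
  apply (induction n)
  using S_sub by auto

lemma Wle_carrier: "Wle n \<subseteq> carrier G"
  using W_carrier by (auto simp: Wle_def)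

lemma Wle_mono: "n \<le> n' \<Longrightarrow> Wle n \<subseteq> Wle n'"
  by (force simp: Wle_def)

lemma W_Wle: "k \<le> n \<Longrightarrow> W k \<subseteq> Wle n"
  by (auto simp: Wle_def)

lemma W_mult: "a \<in> W n \<Longrightarrow> b \<in> W k \<Longrightarrow> a \<otimes> b \<in> W (n + k)"
proof (induction n arbitrary: a)
  case 0
  then have "b \<in> carrier G" using W_carrier by blast
  then show ?case using 0 by simp
next
  case (Suc n)
  then obtain s w where sw: "s \<in> S" "w \<in> W n" "a = s \<otimes> w" by auto
  have "w \<otimes> b \<in> W (n + k)" using Suc sw by blast
  moreover have "a \<otimes> b = s \<otimes> (w \<otimes> b)"
    using sw W_carrier S_sub Suc.prems by (meson m_assoc subsetD)
  ultimately show ?case using sw by auto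
qed

lemma carrier_W: "g \<in> carrier G \<Longrightarrow> \<exists>n. g \<in> W n"
proof -
  assume "g \<in> carrier G"
  then have "g \<in> generate G S" using S_gen by simp
  then show ?thesis
  proof (induction rule: generate.induct)
    case one then show ?case by (metis W.simps(1) singletonI)
  next
    case (incl h)
    have "h \<otimes> \<one> = h" using incl S_sub by auto
    then have "h \<in> W 1" using incl by force
    then show ?case by blast
  next
    case (inv h)
    have "inv h \<otimes> \<one> = inv h" using inv S_sub
      by auto
    then have "inv h \<in> W 1" using S_inv[OF inv] by force
    then show ?case by blast
  next
    case (eng h1 h2)
    then show ?case using W_mult by blast
  qed
qed


inductive jchain :: "'y \<Rightarrow> 'y \<Rightarrow> nat \<Rightarrow> real \<Rightarrow> bool" for x where
  jbase: "x \<in> mspace m \<Longrightarrow> jchain x x 0 0"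
| jmv: "jchain x y n L \<Longrightarrow> z \<in> mspace m \<Longrightarrow> jchain x z n (L + mdist m y z)"
| jjp: "jchain x y n L \<Longrightarrow> s \<in> S \<Longrightarrow> jchain x (\<phi> s y) (Suc n) L"

lemma jchain_mem: "jchain x y n L \<Longrightarrow> x \<in> mspace m \<and> y \<in> mspace m \<and> L \<ge> 0"
  by (induction rule: jchain.induct) (use S_sub img in auto)

lemma jchain_app: "jchain y z n2 L2 \<Longrightarrow> jchain x y n1 L1 \<Longrightarrow> jchain x z (n1+n2) (L1+L2)"
proof (induction rule: jchain.induct)
  case jbase
  then show ?case by simp
next
  case (jmv y' n L z)
  then have "jchain x z (n1 + n) ((L1 + L) + mdist m y' z)" using jchain.jmv by blast
  then show ?case by (simp add: add.assoc)
next
  case (jjp y' n L s)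
  then have "jchain x (\<phi> s y') (Suc (n1 + n)) (L1 + L)" using jchain.jjp by blast
  then show ?case by simp
qed

lemma jchain_rev: "jchain x y n L \<Longrightarrow> jchain y x n L"
proof (induction rule: jchain.induct)
  case jbase
  then show ?case by (simp add: jchain.jbase)
next
  case (jmv y n L z)
  have z: "z \<in> mspace m" by fact
  have "jchain z y 0 (0 + mdist m z y)" using jmv jchain_mem z by (meson jchain.jbase jchain.jmv)
  from jchain_app[OF jmv.IH this] have "jchain z x n (mdist m z y + L)" by simp
  moreover have "mdist m z y + L = L + mdist m y z" by (simp add: mdist_commute)
  ultimately show ?case by simp
next
  case (jjp y n L s)
  have y: "y \<in> mspace m" using jjp jchain_mem by blast
  have sG: "s \<in> carrier G" using jjp S_sub by blast
  have "jchain (\<phi> s y) (\<phi> (inv s) (\<phi> s y)) (Suc 0) 0"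
    using jchain.jjp[OF jchain.jbase[OF img[OF sG y]] S_inv[OF jjp(2)]] .
  then have "jchain (\<phi> s y) y (Suc 0) 0" using invact[OF sG y] by simp
  from jchain_app[OF jjp.IH this] show ?case by simp
qed

lemma jchain_decomp: "jchain x y n L \<Longrightarrow> (n = 0 \<longrightarrow> mdist m x y \<le> L) \<and>
   (\<forall>k. n = Suc k \<longrightarrow> (\<exists>b s L1 L2. jchain x b k L1 \<and> s \<in> S \<and> mdist m (\<phi> s b) y \<le> L2 \<and> L1 + L2 \<le> L \<and> L2 \<ge> 0))"
proof (induction rule: jchain.induct)
  case jbase
  then have "mdist m x x = 0" using mdist_zero[of x m x] by blast
  then show ?case by simp
next
  case (jmv y n L z)
  have xy: "x \<in> mspace m" "y \<in> mspace m" using jmv(1) jchain_mem by auto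
  have z: "z \<in> mspace m" by fact
  show ?case
  proof (intro conjI allI impI)
    assume "n = 0"
    then have "mdist m x y \<le> L" using jmv by blast
    then show "mdist m x z \<le> L + mdist m y z" using mdist_triangle[OF xy z] by linarith
  next
    fix k assume k: "n = Suc k"
    then obtain b s L1 L2 where b: "jchain x b k L1" "s \<in> S" "mdist m (\<phi> s b) y \<le> L2" "L1 + L2 \<le> L" "L2 \<ge> 0"
      using jmv by blast
    have "\<phi> s b \<in> mspace m" using b jchain_mem S_sub img by blast
    then have "mdist m (\<phi> s b) z \<le> L2 + mdist m y z" using mdist_triangle[OF _ xy(2) z] b(3) by fastforce
    then show "\<exists>b s L1 L2. jchain x b k L1 \<and> s \<in> S \<and> mdist m (\<phi> s b) z \<le> L2 \<and> L1 + L2 \<le> L + mdist m y z \<and> L2 \<ge> 0"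
      using b by (intro exI[of _ b] exI[of _ s] exI[of _ L1] exI[of _ "L2 + mdist m y z"]) auto
  qed
next
  case (jjp y n L s)
  have y: "y \<in> mspace m" using jjp(1) jchain_mem by blast
  have sy: "\<phi> s y \<in> mspace m" using img[OF _ y] jjp(2) S_sub by blast
  have "\<exists>b s' L1 L2. jchain x b n L1 \<and> s' \<in> S \<and> mdist m (\<phi> s' b) (\<phi> s y) \<le> L2 \<and> L1 + L2 \<le> L \<and> L2 \<ge> 0"
  proof -
    have "mdist m (\<phi> s y) (\<phi> s y) = 0" using mdist_zero[of "\<phi> s y" m "\<phi> s y"] sy by blast
    then have "jchain x y n L \<and> s \<in> S \<and> mdist m (\<phi> s y) (\<phi> s y) \<le> 0 \<and> L + 0 \<le> L \<and> (0::real) \<ge> 0"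
      using jjp(1,2) by simp
    then show ?thesis by blast
  qed
  then show ?case by simp
qed

definition CS :: "real \<Rightarrow> 'y \<Rightarrow> 'y \<Rightarrow> real set" where
  "CS t x y = {t * L + real n | n L. jchain x y n L}"

definition rho :: "real \<Rightarrow> 'y \<Rightarrow> 'y \<Rightarrow> real" where
  "rho t x y = (if x \<in> mspace m \<and> y \<in> mspace m then Inf (CS t x y) else 0)"

lemma jchain_direct: "x \<in> mspace m \<Longrightarrow> y \<in> mspace m \<Longrightarrow> jchain x y 0 (mdist m x y)"
  using jchain.jmv[OF jchain.jbase] by fastforce

lemma CS_ne: "x \<in> mspace m \<Longrightarrow> y \<in> mspace m \<Longrightarrow> CS t x y \<noteq> {}"
  unfolding CS_def using jchain_direct by blast

lemma CS_bdd: "t \<ge> 0 \<Longrightarrow> bdd_below (CS t x y)"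
  unfolding CS_def bdd_below_def using jchain_mem
  by (intro exI[of _ 0]) (auto intro!: add_nonneg_nonneg mult_nonneg_nonneg)

lemma rho_le: "t \<ge> 0 \<Longrightarrow> jchain x y n L \<Longrightarrow> rho t x y \<le> t * L + real n"
  using jchain_mem[of x y n L] CS_bdd[of t x y] unfolding rho_def
  by (auto intro!: cInf_lower simp: CS_def)

lemma rho_ge: "x \<in> mspace m \<Longrightarrow> y \<in> mspace m \<Longrightarrow> (\<And>n L. jchain x y n L \<Longrightarrow> c \<le> t * L + real n) \<Longrightarrow> c \<le> rho t x y"
  unfolding rho_def using CS_ne[of x y t]
  by (auto intro!: cInf_greatest simp: CS_def)

lemma rho_nonneg: "t \<ge> 0 \<Longrightarrow> 0 \<le> rho t x y"
proof (cases "x \<in> mspace m \<and> y \<in> mspace m")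
  case True
  assume t: "t \<ge> 0"
  show ?thesis
  proof (rule rho_ge)
    fix n L assume "jchain x y n L"
    then have "L \<ge> 0" using jchain_mem by blast
    then show "0 \<le> t * L + real n" using t by simp
  qed (use True in auto)
next
  case False
  assume t: "t \<ge> 0"
  have "rho t x y = 0" unfolding rho_def using False by (rule if_not_P)
  then show ?thesis by simp
qed

lemma rho_commute: "rho t x y = rho t y x"
proof -
  have "CS t x y = CS t y x" unfolding CS_def using jchain_rev by blast
  then show ?thesis unfolding rho_def by auto
qed

lemma rho_pos: "t > 0 \<Longrightarrow> x \<in> mspace m \<Longrightarrow> y \<in> mspace m \<Longrightarrow> min 1 (t * mdist m x y) \<le> rho t x y"
proof (rule rho_ge)
  fix n L assume t: "t > 0" and j: "jchain x y n L"
  show "min 1 (t * mdist m x y) \<le> t * L + real n"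
  proof (cases n)
    case 0
    then have "mdist m x y \<le> L" using jchain_decomp[OF j] by blast
    then show ?thesis using 0 t by (simp add: min.coboundedI2)
  next
    case (Suc k)
    have "t * L \<ge> 0" using t jchain_mem[OF j] by simp
    then show ?thesis using Suc by (simp add: min.coboundedI1)
  qed
qed

lemma rho_triangle: "t \<ge> 0 \<Longrightarrow> x \<in> mspace m \<Longrightarrow> y \<in> mspace m \<Longrightarrow> z \<in> mspace m \<Longrightarrow> rho t x z \<le> rho t x y + rho t y z"
proof -
  assume t: "t \<ge> 0" and xyz: "x \<in> mspace m" "y \<in> mspace m" "z \<in> mspace m"
  have "rho t x z - rho t x y \<le> rho t y z"
  proof (rule rho_ge[OF xyz(2,3)])
    fix n2 L2 assume j2: "jchain y z n2 L2"
    have "rho t x z - (t * L2 + real n2) \<le> rho t x y"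
    proof (rule rho_ge[OF xyz(1,2)])
      fix n1 L1 assume j1: "jchain x y n1 L1"
      have "rho t x z \<le> t * (L1 + L2) + real (n1 + n2)" using rho_le[OF t jchain_app[OF j2 j1]] .
      then show "rho t x z - (t * L2 + real n2) \<le> t * L1 + real n1" by (simp add: algebra_simps)
    qed
    then show "rho t x z - rho t x y \<le> t * L2 + real n2" by linarith
  qed
  then show ?thesis by linarith
qed

lemma rho_metric: "t > 0 \<Longrightarrow> Metric_space (mspace m) (rho t)"
proof (unfold_locales)
  fix x y assume t: "t > 0"
  show "0 \<le> rho t x y" using rho_nonneg t by simp
  show "rho t x y = rho t y x" by (rule rho_commute)
  show "x \<in> mspace m \<Longrightarrow> y \<in> mspace m \<Longrightarrow> (rho t x y = 0) = (x = y)"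
  proof -
    assume xy: "x \<in> mspace m" "y \<in> mspace m"
    show ?thesis
    proof
      assume r: "rho t x y = 0"
      show "x = y"
      proof (rule ccontr)
        assume "x \<noteq> y"
        then have "mdist m x y > 0" using xy mdist_zero mdist_nonneg by (metis less_eq_real_def)
        then have "min 1 (t * mdist m x y) > 0" using t by simp
        then show False using rho_pos[OF t xy] r by linarith
      qed
    next
      assume "x = y"
      then have "rho t x y \<le> t * 0 + real 0" using rho_le[OF _ jchain.jbase[OF xy(1)]] t by simp
      then show "rho t x y = 0" using rho_nonneg[of t x y] t by simp
    qed
  qed
next
  fix x y z assume "t > 0" "x \<in> mspace m" "y \<in> mspace m" "z \<in> mspace m"
  then show "rho t x z \<le> rho t x y + rho t y z" using rho_triangle by simp
qed

lemma rho_adm1: "t > 0 \<Longrightarrow> x \<in> mspace m \<Longrightarrow> y \<in> mspace m \<Longrightarrow> rho t x y \<le> t * mdist m x y"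
proof -
  assume t: "t > 0" and x: "x \<in> mspace m" and y: "y \<in> mspace m"
  have "rho t x y \<le> t * mdist m x y + real 0" using rho_le[OF less_imp_le[OF t] jchain_direct[OF x y]] .
  then show ?thesis by simp
qed

lemma rho_adm2: "t > 0 \<Longrightarrow> x \<in> mspace m \<Longrightarrow> s \<in> S \<Longrightarrow> rho t x (\<phi> s x) \<le> 1"
proof -
  assume t: "t > 0" and x: "x \<in> mspace m" and s: "s \<in> S"
  have "rho t x (\<phi> s x) \<le> t * 0 + real (Suc 0)" using rho_le[OF less_imp_le[OF t] jchain.jjp[OF jchain.jbase[OF x] s]] .
  then show ?thesis by simp
qed

definition adm :: "real \<Rightarrow> ('y \<Rightarrow> 'y \<Rightarrow> real) \<Rightarrow> bool" where
  "adm t \<rho> \<longleftrightarrow> Metric_space (mspace m) \<rho> \<and>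
      (\<forall>x\<in>mspace m. \<forall>x'\<in>mspace m. \<rho> x x' \<le> t * mdist m x x') \<and>
      (\<forall>x\<in>mspace m. \<forall>s\<in>S. \<rho> x (\<phi> s x) \<le> 1)"

lemma wd_eq: "warped_dist m \<phi> S t x y = Sup {\<rho> x y | \<rho>. adm t \<rho>}"
  unfolding warped_dist_def adm_def by simp

lemma rho_adm: "t > 0 \<Longrightarrow> adm t (rho t)"
  unfolding adm_def using rho_metric rho_adm1 rho_adm2 by blast

lemma wd_ge_rho: "t > 0 \<Longrightarrow> x \<in> mspace m \<Longrightarrow> y \<in> mspace m \<Longrightarrow> rho t x y \<le> warped_dist m \<phi> S t x y"
  unfolding wd_eq
proof (rule cSup_upper)
  assume t: "t > 0" and xy: "x \<in> mspace m" "y \<in> mspace m"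
  show "rho t x y \<in> {\<rho> x y |\<rho>. adm t \<rho>}" using rho_adm[OF t] by blast
  show "bdd_above {\<rho> x y |\<rho>. adm t \<rho>}"
  proof (rule bdd_aboveI)
    fix r assume "r \<in> {\<rho> x y |\<rho>. adm t \<rho>}"
    then obtain \<rho> where "adm t \<rho>" "r = \<rho> x y" by blast
    then show "r \<le> t * mdist m x y" using xy unfolding adm_def by blast
  qed
qed

lemma wd_le: "t > 0 \<Longrightarrow> (\<And>\<rho>. adm t \<rho> \<Longrightarrow> \<rho> x y \<le> K) \<Longrightarrow> warped_dist m \<phi> S t x y \<le> K"
proof -
  assume t: "t > 0" and K: "\<And>\<rho>. adm t \<rho> \<Longrightarrow> \<rho> x y \<le> K"
  have ne: "{\<rho> x y |\<rho>. adm t \<rho>} \<noteq> {}" using rho_adm[OF t] by blast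
  show ?thesis unfolding wd_eq
  proof (rule cSup_least[OF ne])
    fix r assume "r \<in> {\<rho> x y |\<rho>. adm t \<rho>}"
    then obtain \<rho> where "adm t \<rho>" "r = \<rho> x y" by blast
    then show "r \<le> K" using K by blast
  qed
qed

lemma wd_nonneg: "t > 0 \<Longrightarrow> x \<in> mspace m \<Longrightarrow> y \<in> mspace m \<Longrightarrow> 0 \<le> warped_dist m \<phi> S t x y"
  using order_trans[OF rho_nonneg wd_ge_rho] by (meson less_imp_le)

lemma adm_metric: "adm t \<rho> \<Longrightarrow> Metric_space (mspace m) \<rho>"
  unfolding adm_def by simp

lemma adm_commute: "adm t \<rho> \<Longrightarrow> \<rho> x y = \<rho> y x"
  using Metric_space.commute[OF adm_metric] .

lemma adm_jump: "adm t \<rho> \<Longrightarrow> x \<in> mspace m \<Longrightarrow> s \<in> S \<Longrightarrow> \<rho> x (\<phi> s x) \<le> 1"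
  unfolding adm_def by simp

lemma wd_sym: "warped_dist m \<phi> S t x y = warped_dist m \<phi> S t y x"
proof -
  have "{\<rho> x y |\<rho>. adm t \<rho>} = {\<rho> y x |\<rho>. adm t \<rho>}"
  proof (rule equalityI; rule subsetI)
    fix r assume "r \<in> {\<rho> x y |\<rho>. adm t \<rho>}"
    then obtain \<rho> where r: "adm t \<rho>" "r = \<rho> x y" by blast
    then have "r = \<rho> y x" using adm_commute by simp
    then show "r \<in> {\<rho> y x |\<rho>. adm t \<rho>}" using r by blast
  next
    fix r assume "r \<in> {\<rho> y x |\<rho>. adm t \<rho>}"
    then obtain \<rho> where r: "adm t \<rho>" "r = \<rho> y x" by blast
    then have "r = \<rho> x y" using adm_commute by simp
    then show "r \<in> {\<rho> x y |\<rho>. adm t \<rho>}" using r by blast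
  qed
  then show ?thesis unfolding wd_eq by simp
qed

lemma adm_word: "adm t \<rho> \<Longrightarrow> w \<in> W n \<Longrightarrow> x \<in> mspace m \<Longrightarrow> \<rho> x (\<phi> w x) \<le> real n"
proof (induction n arbitrary: w)
  case 0
  have ms: "Metric_space (mspace m) \<rho>" using adm_metric 0 by blast
  have "\<rho> x x = 0" using Metric_space.zero[OF ms 0(3) 0(3)] by simp
  then show ?case using 0 one by simp
next
  case (Suc n)
  then obtain s v where sv: "s \<in> S" "v \<in> W n" "w = s \<otimes> v" by auto
  have sG: "s \<in> carrier G" and vG: "v \<in> carrier G" using sv S_sub W_carrier by auto
  have x: "x \<in> mspace m" by fact
  have vx: "\<phi> v x \<in> mspace m" using img vG x by blast
  have ms: "Metric_space (mspace m) \<rho>" using adm_metric Suc by blast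
  have "\<rho> x (\<phi> w x) = \<rho> x (\<phi> s (\<phi> v x))" using sv comp sG vG x by simp
  also have "\<dots> \<le> \<rho> x (\<phi> v x) + \<rho> (\<phi> v x) (\<phi> s (\<phi> v x))"
    using Metric_space.triangle[OF ms x vx img[OF sG vx]] .
  also have "\<dots> \<le> real n + 1" using Suc.IH[OF Suc.prems(1) sv(2) x] adm_jump[OF Suc.prems(1) vx sv(1)] by linarith
  finally show ?case by simp
qed

lemma wd_word: "t > 0 \<Longrightarrow> w \<in> W n \<Longrightarrow> x \<in> mspace m \<Longrightarrow> warped_dist m \<phi> S t x (\<phi> w x) \<le> real n"
proof -
  assume t: "t > 0" and w: "w \<in> W n" and x: "x \<in> mspace m"
  show ?thesis by (rule wd_le[OF t]) (rule adm_word[OF _ w x])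
qed

lemma wd_group: "g \<in> carrier G \<Longrightarrow> \<exists>K\<ge>0. \<forall>t>0. \<forall>x\<in>mspace m. warped_dist m \<phi> S t x (\<phi> g x) \<le> K"
proof -
  assume "g \<in> carrier G"
  then obtain n where n: "g \<in> W n" using carrier_W by blast
  show ?thesis using wd_word[OF _ n] by (intro exI[of _ "real n"]) simp
qed


lemma cont_pt: "g \<in> carrier G \<Longrightarrow> p \<in> mspace m \<Longrightarrow> e > 0 \<Longrightarrow>
    \<exists>\<delta>>0. \<forall>z\<in>mspace m. mdist m p z < \<delta> \<longrightarrow> mdist m (\<phi> g p) (\<phi> g z) < e"
proof -
  assume g: "g \<in> carrier G" and p: "p \<in> mspace m" and e: "e > 0"
  have "continuous_map (Metric_space.mtopology (mspace m) (mdist m)) (Metric_space.mtopology (mspace m) (mdist m)) (\<phi> g)"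
    using contg[OF g] unfolding mtopology_of_def by simp
  then have "\<forall>a\<in>mspace m. \<forall>\<epsilon>>0. \<exists>\<delta>>0. \<forall>x. x \<in> mspace m \<and> mdist m a x < \<delta> \<longrightarrow> mdist m (\<phi> g a) (\<phi> g x) < \<epsilon>"
    unfolding Metric_space.metric_continuous_map[OF Metric_space_mspace_mdist Metric_space_mspace_mdist] by (rule conjunct2)
  then obtain \<delta> where "\<delta> > 0" "\<forall>x. x \<in> mspace m \<and> mdist m p x < \<delta> \<longrightarrow> mdist m (\<phi> g p) (\<phi> g x) < e"
    using p e by meson
  then show ?thesis by blast
qed

lemma W_Wle_Suc: "s \<in> S \<Longrightarrow> \<eta> \<in> Wle n \<Longrightarrow> s \<otimes> \<eta> \<in> Wle (Suc n)"
proof -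
  assume s: "s \<in> S" and e: "\<eta> \<in> Wle n"
  then obtain j where j: "j \<le> n" "\<eta> \<in> W j" unfolding Wle_def by blast
  then have "s \<otimes> \<eta> \<in> W (Suc j)" using s by auto
  then show ?thesis using j unfolding Wle_def by (intro UN_I[of "Suc j"]) auto
qed

lemma approx_core: "x \<in> mspace m \<Longrightarrow> \<epsilon> > 0 \<Longrightarrow>
   \<exists>\<delta>>0. \<forall>y k L. jchain x y k L \<longrightarrow> k \<le> n \<longrightarrow> L < \<delta> \<longrightarrow> (\<exists>\<eta>\<in>Wle n. mdist m y (\<phi> \<eta> x) < \<epsilon>)"
proof (induction n arbitrary: \<epsilon>)
  case 0
  have x: "x \<in> mspace m" by fact
  show ?case
  proof (intro exI[of _ \<epsilon>] conjI allI impI)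
    show "\<epsilon> > 0" by fact
    fix y k L assume j: "jchain x y k L" and k: "k \<le> 0" and L: "L < \<epsilon>"
    then have "mdist m x y \<le> L" using jchain_decomp[OF j] by simp
    moreover have "\<one> \<in> Wle 0" unfolding Wle_def by simp
    ultimately show "\<exists>\<eta>\<in>Wle 0. mdist m y (\<phi> \<eta> x) < \<epsilon>"
      using L one[OF x] by (metis mdist_commute order_le_less_trans)
  qed
next
  case (Suc n)
  have x: "x \<in> mspace m" and e: "\<epsilon> > 0" by fact+
  define Pts where "Pts = (\<lambda>\<eta>. \<phi> \<eta> x) ` Wle n"
  have Pts_M: "Pts \<subseteq> mspace m" unfolding Pts_def using Wle_carrier img x by blast
  have finSP: "finite (S \<times> Pts)" unfolding Pts_def using S_fin Wle_fin by simp
  define Q where "Q = (\<lambda>a \<delta>. \<forall>z\<in>mspace m. mdist m (snd a) z < \<delta> \<longrightarrow> mdist m (\<phi> (fst a) (snd a)) (\<phi> (fst a) z) < \<epsilon>/2)"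
  have "\<exists>\<delta>>0. \<forall>a\<in>S \<times> Pts. Q a \<delta>"
  proof (rule finite_min_delta[OF finSP])
    fix a assume a: "a \<in> S \<times> Pts"
    then have "fst a \<in> carrier G" "snd a \<in> mspace m" using S_sub Pts_M by auto
    then show "\<exists>\<delta>>0. Q a \<delta>" unfolding Q_def using cont_pt[of "fst a" "snd a" "\<epsilon>/2"] e by simp
  next
    fix a \<delta> \<delta>' assume "Q a \<delta>" "0 < \<delta>'" "\<delta>' \<le> \<delta>"
    then show "Q a \<delta>'" unfolding Q_def by auto
  qed
  then obtain \<delta>1 where d1: "\<delta>1 > 0" "\<forall>a\<in>S \<times> Pts. Q a \<delta>1" by blast
  define \<epsilon>' where "\<epsilon>' = min \<delta>1 (\<epsilon>/2)"
  have e': "\<epsilon>' > 0" using d1 e unfolding \<epsilon>'_def by simp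
  obtain \<delta>0 where d0: "\<delta>0 > 0" "\<forall>y k L. jchain x y k L \<longrightarrow> k \<le> n \<longrightarrow> L < \<delta>0 \<longrightarrow> (\<exists>\<eta>\<in>Wle n. mdist m y (\<phi> \<eta> x) < \<epsilon>')"
    using Suc.IH[OF x e'] by blast
  show ?case
  proof (intro exI[of _ "min \<delta>0 (\<epsilon>/2)"] conjI allI impI)
    show "min \<delta>0 (\<epsilon>/2) > 0" using d0 e by simp
    fix y k L assume j: "jchain x y k L" and k: "k \<le> Suc n" and L: "L < min \<delta>0 (\<epsilon>/2)"
    show "\<exists>\<eta>\<in>Wle (Suc n). mdist m y (\<phi> \<eta> x) < \<epsilon>"
    proof (cases "k \<le> n")
      case True
      then obtain \<eta> where "\<eta> \<in> Wle n" "mdist m y (\<phi> \<eta> x) < \<epsilon>'" using d0 j L by force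
      moreover have "Wle n \<subseteq> Wle (Suc n)" by (rule Wle_mono) simp
      moreover have "\<epsilon>' < \<epsilon>" unfolding \<epsilon>'_def using e by simp
      ultimately show ?thesis by (meson subsetD order.strict_trans)
    next
      case False
      then have kn: "k = Suc n" using k by simp
      then obtain b s L1 L2 where b: "jchain x b n L1" "s \<in> S" "mdist m (\<phi> s b) y \<le> L2" "L1 + L2 \<le> L" "L2 \<ge> 0"
        using jchain_decomp[OF j] by blast
      have L1: "L1 < \<delta>0" using b L by simp
      obtain \<eta> where eta: "\<eta> \<in> Wle n" "mdist m b (\<phi> \<eta> x) < \<epsilon>'" using d0 b(1) L1 by blast
      have p: "\<phi> \<eta> x \<in> Pts" using eta unfolding Pts_def by blast
      have bM: "b \<in> mspace m" using jchain_mem[OF b(1)] by blast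
      have sG: "s \<in> carrier G" using b S_sub by blast
      have etaG: "\<eta> \<in> carrier G" using eta Wle_carrier by blast
      have "mdist m b (\<phi> \<eta> x) < \<delta>1" using eta(2) unfolding \<epsilon>'_def by simp
      then have db: "mdist m (\<phi> \<eta> x) b < \<delta>1" by (simp add: mdist_commute)
      have "Q (s, \<phi> \<eta> x) \<delta>1" using d1(2) b(2) p by blast
      then have c1: "mdist m (\<phi> s (\<phi> \<eta> x)) (\<phi> s b) < \<epsilon>/2" using db bM unfolding Q_def by simp
      have "L2 < \<epsilon>/2" using b L L1 jchain_mem[OF b(1)] by simp
      then have c2: "mdist m y (\<phi> s b) < \<epsilon>/2" using b(3) by (simp add: mdist_commute)
      have yM: "y \<in> mspace m" using jchain_mem[OF j] by blast
      have "mdist m y (\<phi> s (\<phi> \<eta> x)) \<le> mdist m y (\<phi> s b) + mdist m (\<phi> s b) (\<phi> s (\<phi> \<eta> x))"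
        using mdist_triangle[OF yM img[OF sG bM] img[OF sG img[OF etaG x]]] .
      also have "\<dots> < \<epsilon>" using c1 c2 by (simp add: mdist_commute)
      finally have "mdist m y (\<phi> (s \<otimes> \<eta>) x) < \<epsilon>" using comp[OF sG etaG x] by simp
      then show ?thesis using W_Wle_Suc[OF b(2) eta(1)] by blast
    qed
  qed
qed

lemma approx: "x \<in> mspace m \<Longrightarrow> closedin (mtopology_of m) Z \<Longrightarrow> K \<ge> 0 \<Longrightarrow>
   (\<And>t. t > 0 \<Longrightarrow> \<exists>z\<in>Z. warped_dist m \<phi> S t x z \<le> K) \<Longrightarrow> \<exists>\<eta>\<in>Wle (nat \<lceil>K\<rceil>). \<phi> \<eta> x \<in> Z"
proof (rule ccontr)
  assume x: "x \<in> mspace m" and Z: "closedin (mtopology_of m) Z" and K: "K \<ge> 0"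
    and H: "\<And>t. t > 0 \<Longrightarrow> \<exists>z\<in>Z. warped_dist m \<phi> S t x z \<le> K"
    and nz: "\<not> (\<exists>\<eta>\<in>Wle (nat \<lceil>K\<rceil>). \<phi> \<eta> x \<in> Z)"
  define N where "N = nat \<lceil>K\<rceil>"
  have ZM: "Z \<subseteq> mspace m" using closedin_subset[OF Z] by simp
  have op: "openin (Metric_space.mtopology (mspace m) (mdist m)) (mspace m - Z)"
    using Z unfolding closedin_def mtopology_of_def by (simp add: Metric_space.topspace_mtopology[OF Metric_space_mspace_mdist])
  obtain r0 where r0: "r0 > 0" "\<forall>\<eta>\<in>Wle N. \<forall>z\<in>Z. \<not> mdist m z (\<phi> \<eta> x) < r0"
  proof -
    have "\<exists>\<delta>>0. \<forall>\<eta>\<in>Wle N. (\<lambda>\<eta> r. \<forall>z\<in>Z. \<not> mdist m z (\<phi> \<eta> x) < r) \<eta> \<delta>"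
    proof (rule finite_min_delta[OF Wle_fin])
      fix \<eta> assume e: "\<eta> \<in> Wle N"
      have pM: "\<phi> \<eta> x \<in> mspace m" using img e Wle_carrier x by blast
      have "\<phi> \<eta> x \<notin> Z" using nz e unfolding N_def by blast
      then have pZ: "\<phi> \<eta> x \<in> mspace m - Z" using pM by simp
      have "\<forall>y. y \<in> mspace m - Z \<longrightarrow> (\<exists>r>0. Metric_space.mball (mspace m) (mdist m) y r \<subseteq> mspace m - Z)"
        using op unfolding Metric_space.openin_mtopology[OF Metric_space_mspace_mdist] by (rule conjunct2)
      then obtain r where r: "r > 0" "Metric_space.mball (mspace m) (mdist m) (\<phi> \<eta> x) r \<subseteq> mspace m - Z"
        using pZ by blast
      have "\<forall>z\<in>Z. \<not> mdist m z (\<phi> \<eta> x) < r"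
      proof (intro ballI notI)
        fix z assume z: "z \<in> Z" and d: "mdist m z (\<phi> \<eta> x) < r"
        have "mdist m (\<phi> \<eta> x) z < r" using d by (simp add: mdist_commute)
        then have "z \<in> Metric_space.mball (mspace m) (mdist m) (\<phi> \<eta> x) r"
          using z ZM pM by (simp add: Metric_space.in_mball[OF Metric_space_mspace_mdist] subsetD)
        then show False using r z by blast
      qed
      then show "\<exists>\<delta>>0. (\<lambda>\<eta> r. \<forall>z\<in>Z. \<not> mdist m z (\<phi> \<eta> x) < r) \<eta> \<delta>" using r by blast
    qed auto
    then show ?thesis using that by auto
  qed
  obtain \<delta> where d: "\<delta> > 0" "\<forall>y k L. jchain x y k L \<longrightarrow> k \<le> N \<longrightarrow> L < \<delta> \<longrightarrow> (\<exists>\<eta>\<in>Wle N. mdist m y (\<phi> \<eta> x) < r0)"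
    using approx_core[OF x r0(1)] by blast
  define t where "t = 2 * (K + 1) / \<delta>"
  have t: "t > 0" unfolding t_def using d K by simp
  obtain z where z: "z \<in> Z" "warped_dist m \<phi> S t x z \<le> K" using H[OF t] by blast
  have zM: "z \<in> mspace m" using z ZM by blast
  have rz: "rho t x z \<le> K" using wd_ge_rho[OF t x zM] z by simp
  have "\<exists>k L. jchain x z k L \<and> t * L + real k < K + 1"
  proof (rule ccontr)
    assume nex: "\<not> (\<exists>k L. jchain x z k L \<and> t * L + real k < K + 1)"
    have "K + 1 \<le> rho t x z"
    proof (rule rho_ge[OF x zM])
      fix k L assume "jchain x z k L"
      then show "K + 1 \<le> t * L + real k" using nex by (meson not_less)
    qed
    then show False using rz by simp
  qed
  then obtain k L where kL: "jchain x z k L" "t * L + real k < K + 1" by blast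
  have L0: "L \<ge> 0" using jchain_mem[OF kL(1)] by simp
  have "t * L \<ge> 0" using t L0 by simp
  then have "real k < K + 1" using kL by linarith
  then have "real k < real_of_int \<lceil>K\<rceil> + 1" using le_of_int_ceiling[of K] by linarith
  then have kN: "k \<le> N" unfolding N_def by linarith
  have "t * L < K + 1" using kL by simp
  then have "L < (K + 1) / t" using t by (simp add: field_simps)
  also have "(K + 1) / t = \<delta> / 2" unfolding t_def using d K by (simp add: field_simps)
  finally have "L < \<delta>" using d by simp
  then obtain \<eta> where "\<eta> \<in> Wle N" "mdist m z (\<phi> \<eta> x) < r0" using d kL kN by blast
  then show False using r0 z by blast
qed

end


locale mctx =
  fixes G :: "'g monoid" and D :: "'d monoid"
    and mY :: "'y metric" and mX :: "'x metric"
    and \<phi> :: "'g \<Rightarrow> 'y \<Rightarrow> 'y" and \<psi> :: "'d \<Rightarrow> 'x \<Rightarrow> 'x"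
    and SG :: "'g set" and SD :: "'d set"
    and f :: "'y \<Rightarrow> 'x"
    and I :: "'i set" and t \<tau> :: "'i \<Rightarrow> real" and C A :: real
  assumes G: "group G" and D: "group D"
    and SG: "fin_sym_gen_set G SG" and SD: "fin_sym_gen_set D SD"
    and Ycomp: "compact_space (mtopology_of mY)"
    and Xcomp: "compact_space (mtopology_of mX)"
    and Yconn: "connected_space (mtopology_of mY)"
    and actY: "continuous_action G mY \<phi>"
    and actX: "continuous_action D mX \<psi>"
    and free_orbit: "\<exists>y\<in>mspace mY. free_point G \<phi> y"
    and free_act: "\<forall>x\<in>mspace mX. free_point D \<psi> x"
    and f_cont: "continuous_map (mtopology_of mY) (mtopology_of mX) f"
    and t_surj: "t ` I = {0<..}" and \<tau>_surj: "\<tau> ` I = {0<..}"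
    and C: "C \<ge> 1" and A: "A \<ge> 0"
    and qi_lower: "\<forall>i\<in>I. \<forall>y\<in>mspace mY. \<forall>y'\<in>mspace mY.
        warped_dist mY \<phi> SG (t i) y y' / C - A
          \<le> warped_dist mX \<psi> SD (\<tau> i) (f y) (f y')"
    and qi_upper: "\<forall>i\<in>I. \<forall>y\<in>mspace mY. \<forall>y'\<in>mspace mY.
        warped_dist mX \<psi> SD (\<tau> i) (f y) (f y')
          \<le> C * warped_dist mY \<phi> SG (t i) y y' + A"
    and qi_dense: "\<forall>i\<in>I. \<forall>x\<in>mspace mX. \<exists>y\<in>mspace mY.
        warped_dist mX \<psi> SD (\<tau> i) (f y) x \<le> A"

sublocale mctx \<subseteq> wY: warp_sp G mY \<phi> SG
  by (intro warp_sp.intro warp_sp_axioms.intro G SG actY)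

sublocale mctx \<subseteq> wX: warp_sp D mX \<psi> SD
  by (intro warp_sp.intro warp_sp_axioms.intro D SD actX)

context mctx
begin

lemma t_pos: "i \<in> I \<Longrightarrow> t i > 0" using t_surj by auto
lemma \<tau>_pos: "i \<in> I \<Longrightarrow> \<tau> i > 0" using \<tau>_surj by auto
lemma t_hit: "r > 0 \<Longrightarrow> \<exists>i\<in>I. t i = r"
proof -
  assume "r > 0" then have "r \<in> t ` I" using t_surj by simp
  then show ?thesis by (metis imageE)
qed
lemma \<tau>_hit: "r > 0 \<Longrightarrow> \<exists>i\<in>I. \<tau> i = r"
proof -
  assume "r > 0" then have "r \<in> \<tau> ` I" using \<tau>_surj by simp
  then show ?thesis by (metis imageE)
qed

lemma fM: "y \<in> mspace mY \<Longrightarrow> f y \<in> mspace mX"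
  using continuous_map_image_subset_topspace[OF f_cont] by auto

lemma Cpos: "C > 0" using C by simp

lemma freeX: "a \<in> carrier D \<Longrightarrow> b \<in> carrier D \<Longrightarrow> x \<in> mspace mX \<Longrightarrow> \<psi> a x = \<psi> b x \<Longrightarrow> a = b"
proof -
  assume a: "a \<in> carrier D" and b: "b \<in> carrier D" and x: "x \<in> mspace mX" and e: "\<psi> a x = \<psi> b x"
  have ib: "inv\<^bsub>D\<^esub> b \<in> carrier D" using b by simp
  have "\<psi> (inv\<^bsub>D\<^esub> b \<otimes>\<^bsub>D\<^esub> a) x = \<psi> (inv\<^bsub>D\<^esub> b) (\<psi> b x)" using wX.comp[OF ib a x] e by simp
  also have "\<dots> = x" using wX.invact[OF b x] .
  finally have "inv\<^bsub>D\<^esub> b \<otimes>\<^bsub>D\<^esub> a = \<one>\<^bsub>D\<^esub>"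
    using free_act x ib a unfolding free_point_def by simp
  then show "a = b" using a b by (metis wX.inv_inv wX.inv_equality wX.inv_closed)
qed

lemma freeY0: "y \<in> mspace mY \<Longrightarrow> free_point G \<phi> y \<Longrightarrow> a \<in> carrier G \<Longrightarrow> b \<in> carrier G \<Longrightarrow> \<phi> a y = \<phi> b y \<Longrightarrow> a = b"
proof -
  assume x: "y \<in> mspace mY" and fr: "free_point G \<phi> y" and a: "a \<in> carrier G" and b: "b \<in> carrier G" and e: "\<phi> a y = \<phi> b y"
  have ib: "inv\<^bsub>G\<^esub> b \<in> carrier G" using b by simp
  have "\<phi> (inv\<^bsub>G\<^esub> b \<otimes>\<^bsub>G\<^esub> a) y = \<phi> (inv\<^bsub>G\<^esub> b) (\<phi> b y)" using wY.comp[OF ib a x] e by simp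
  also have "\<dots> = y" using wY.invact[OF b x] .
  finally have "inv\<^bsub>G\<^esub> b \<otimes>\<^bsub>G\<^esub> a = \<one>\<^bsub>G\<^esub>"
    using fr ib a unfolding free_point_def by simp
  then show "a = b" using a b by (metis wY.inv_inv wY.inv_equality wY.inv_closed)
qed

lemma MY_ne: "\<exists>y0. y0 \<in> mspace mY \<and> free_point G \<phi> y0" using free_orbit by blast

lemma HausX: "Hausdorff_space (mtopology_of mX)"
  unfolding mtopology_of_def by (rule Metric_space.Hausdorff_space_mtopology[OF Metric_space_mspace_mdist])

lemma closed_sing: "x \<in> mspace mX \<Longrightarrow> closedin (mtopology_of mX) {x}"
  using closedin_Hausdorff_singleton[OF HausX] by simp

lemma HausY: "Hausdorff_space (mtopology_of mY)"
  unfolding mtopology_of_def by (rule Metric_space.Hausdorff_space_mtopology[OF Metric_space_mspace_mdist])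

lemma closed_singY: "y \<in> mspace mY \<Longrightarrow> closedin (mtopology_of mY) {y}"
  using closedin_Hausdorff_singleton[OF HausY] by simp

lemma equiv_exists: "\<gamma> \<in> carrier G \<Longrightarrow> \<exists>N. \<forall>y\<in>mspace mY. \<exists>\<eta>\<in>wX.Wle N. f (\<phi> \<gamma> y) = \<psi> \<eta> (f y)"
proof -
  assume g: "\<gamma> \<in> carrier G"
  obtain K where K: "K \<ge> 0" "\<forall>r>0. \<forall>y\<in>mspace mY. warped_dist mY \<phi> SG r y (\<phi> \<gamma> y) \<le> K"
    using wY.wd_group[OF g] by blast
  have KK: "C * K + A \<ge> 0" using K Cpos A by simp
  have "\<forall>y\<in>mspace mY. \<exists>\<eta>\<in>wX.Wle (nat \<lceil>C * K + A\<rceil>). \<psi> \<eta> (f y) \<in> {f (\<phi> \<gamma> y)}"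
  proof
    fix y assume y: "y \<in> mspace mY"
    have gy: "\<phi> \<gamma> y \<in> mspace mY" using wY.img[OF g y] .
    show "\<exists>\<eta>\<in>wX.Wle (nat \<lceil>C * K + A\<rceil>). \<psi> \<eta> (f y) \<in> {f (\<phi> \<gamma> y)}"
    proof (rule wX.approx[OF fM[OF y] closed_sing[OF fM[OF gy]] KK])
      fix r :: real assume r: "r > 0"
      obtain i where i: "i \<in> I" "\<tau> i = r" using \<tau>_hit[OF r] by blast
      have "warped_dist mX \<psi> SD (\<tau> i) (f y) (f (\<phi> \<gamma> y)) \<le> C * warped_dist mY \<phi> SG (t i) y (\<phi> \<gamma> y) + A"
        using qi_upper i y gy by blast
      also have "\<dots> \<le> C * K + A" using K t_pos[OF i(1)] y Cpos by (simp add: mult_left_mono)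
      finally show "\<exists>z\<in>{f (\<phi> \<gamma> y)}. warped_dist mX \<psi> SD r (f y) z \<le> C * K + A" using i by simp
    qed
  qed
  then have "\<forall>y\<in>mspace mY. \<exists>\<eta>\<in>wX.Wle (nat \<lceil>C * K + A\<rceil>). f (\<phi> \<gamma> y) = \<psi> \<eta> (f y)"
    by (simp add: eq_commute)
  then show ?thesis by blast
qed

end

context mctx
begin

lemma pi_ex: "\<gamma> \<in> carrier G \<Longrightarrow> \<exists>\<eta>. \<eta> \<in> carrier D \<and> (\<forall>y\<in>mspace mY. f (\<phi> \<gamma> y) = \<psi> \<eta> (f y))"
proof -
  assume g: "\<gamma> \<in> carrier G"
  obtain N where N: "\<forall>y\<in>mspace mY. \<exists>\<eta>\<in>wX.Wle N. f (\<phi> \<gamma> y) = \<psi> \<eta> (f y)" using equiv_exists[OF g] by blast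
  obtain y0 where y0: "y0 \<in> mspace mY" using MY_ne by blast
  define B where "B \<eta> = {y \<in> topspace (mtopology_of mY). (f \<circ> \<phi> \<gamma>) y = (\<psi> \<eta> \<circ> f) y}" for \<eta>
  have "\<exists>\<eta>\<in>wX.Wle N. B \<eta> = topspace (mtopology_of mY)"
  proof (rule clopen_cover[OF Yconn wX.Wle_fin])
    fix \<eta> assume e: "\<eta> \<in> wX.Wle N"
    then have eD: "\<eta> \<in> carrier D" using wX.Wle_carrier by blast
    show "closedin (mtopology_of mY) (B \<eta>)" unfolding B_def
      by (rule closedin_continuous_maps_eq[OF HausX continuous_map_compose[OF wY.contg[OF g] f_cont]
            continuous_map_compose[OF f_cont wX.contg[OF eD]]])
  next
    fix a b assume a: "a \<in> wX.Wle N" and b: "b \<in> wX.Wle N" and ab: "a \<noteq> b"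
    show "B a \<inter> B b = {}"
    proof (rule ccontr)
      assume "B a \<inter> B b \<noteq> {}"
      then obtain y where "y \<in> B a" "y \<in> B b" by blast
      then have y: "y \<in> mspace mY" "\<psi> a (f y) = \<psi> b (f y)" unfolding B_def by auto
      have "a = b" using freeX[OF _ _ fM[OF y(1)] y(2)] a b wX.Wle_carrier by blast
      then show False using ab by simp
    qed
  next
    show "topspace (mtopology_of mY) \<subseteq> \<Union> (B ` wX.Wle N)"
    proof
      fix y assume "y \<in> topspace (mtopology_of mY)"
      then have y: "y \<in> mspace mY" by simp
      then obtain \<eta> where "\<eta> \<in> wX.Wle N" "f (\<phi> \<gamma> y) = \<psi> \<eta> (f y)" using N by blast
      then show "y \<in> \<Union> (B ` wX.Wle N)" unfolding B_def using y by auto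
    qed
  next
    show "y0 \<in> topspace (mtopology_of mY)" using y0 by simp
  qed
  then obtain \<eta> where e: "\<eta> \<in> wX.Wle N" "B \<eta> = topspace (mtopology_of mY)" by blast
  then have "\<forall>y\<in>mspace mY. f (\<phi> \<gamma> y) = \<psi> \<eta> (f y)" unfolding B_def by auto
  then show ?thesis using e wX.Wle_carrier by blast
qed

definition pi :: "'g \<Rightarrow> 'd" where
  "pi \<gamma> = (SOME \<eta>. \<eta> \<in> carrier D \<and> (\<forall>y\<in>mspace mY. f (\<phi> \<gamma> y) = \<psi> \<eta> (f y)))"

lemma pi_prop: "\<gamma> \<in> carrier G \<Longrightarrow> pi \<gamma> \<in> carrier D \<and> (\<forall>y\<in>mspace mY. f (\<phi> \<gamma> y) = \<psi> (pi \<gamma>) (f y))"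
  unfolding pi_def by (rule someI_ex[OF pi_ex])

lemma pi_carrier: "\<gamma> \<in> carrier G \<Longrightarrow> pi \<gamma> \<in> carrier D" using pi_prop by blast
lemma pi_eq: "\<gamma> \<in> carrier G \<Longrightarrow> y \<in> mspace mY \<Longrightarrow> f (\<phi> \<gamma> y) = \<psi> (pi \<gamma>) (f y)" using pi_prop by blast

lemma pi_unique: "\<gamma> \<in> carrier G \<Longrightarrow> \<eta> \<in> carrier D \<Longrightarrow> y \<in> mspace mY \<Longrightarrow> f (\<phi> \<gamma> y) = \<psi> \<eta> (f y) \<Longrightarrow> pi \<gamma> = \<eta>"
  using freeX[OF pi_carrier _ fM] pi_eq by metis

lemma pi_hom: "pi \<in> hom G D"
proof -
  obtain y0 where y0: "y0 \<in> mspace mY" using MY_ne by blast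
  have "pi (a \<otimes>\<^bsub>G\<^esub> b) = pi a \<otimes>\<^bsub>D\<^esub> pi b" if a: "a \<in> carrier G" and b: "b \<in> carrier G" for a b
  proof (rule pi_unique[OF _ _ y0])
    show "a \<otimes>\<^bsub>G\<^esub> b \<in> carrier G" using a b by simp
    show "pi a \<otimes>\<^bsub>D\<^esub> pi b \<in> carrier D" using pi_carrier a b by simp
    have by0: "\<phi> b y0 \<in> mspace mY" using wY.img[OF b y0] .
    have "f (\<phi> (a \<otimes>\<^bsub>G\<^esub> b) y0) = f (\<phi> a (\<phi> b y0))" using wY.comp[OF a b y0] by simp
    also have "\<dots> = \<psi> (pi a) (f (\<phi> b y0))" using pi_eq[OF a by0] .
    also have "\<dots> = \<psi> (pi a) (\<psi> (pi b) (f y0))" using pi_eq[OF b y0] by simp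
    also have "\<dots> = \<psi> (pi a \<otimes>\<^bsub>D\<^esub> pi b) (f y0)" using wX.comp[OF pi_carrier[OF a] pi_carrier[OF b] fM[OF y0]] by simp
    finally show "f (\<phi> (a \<otimes>\<^bsub>G\<^esub> b) y0) = \<psi> (pi a \<otimes>\<^bsub>D\<^esub> pi b) (f y0)" .
  qed
  then show ?thesis unfolding hom_def using pi_carrier by auto
qed

lemma pi_group_hom: "group_hom G D pi"
  by (intro group_hom.intro group_hom_axioms.intro G D pi_hom)

lemma lift: "a \<in> wX.W n \<Longrightarrow> y \<in> mspace mY \<Longrightarrow> y' \<in> mspace mY \<Longrightarrow> \<psi> a (f y) = f y' \<Longrightarrow>
   \<exists>\<gamma>\<in>wY.Wle (nat \<lceil>C * (real n + A)\<rceil>). y' = \<phi> \<gamma> y \<and> pi \<gamma> = a"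
proof -
  assume a: "a \<in> wX.W n" and y: "y \<in> mspace mY" and y': "y' \<in> mspace mY" and e: "\<psi> a (f y) = f y'"
  have aD: "a \<in> carrier D" using a wX.W_carrier by blast
  have KK: "C * (real n + A) \<ge> 0" using Cpos A by simp
  have "\<exists>\<gamma>\<in>wY.Wle (nat \<lceil>C * (real n + A)\<rceil>). \<phi> \<gamma> y \<in> {y'}"
  proof (rule wY.approx[OF y closed_singY[OF y'] KK])
    fix r :: real assume r: "r > 0"
    obtain i where i: "i \<in> I" "t i = r" using t_hit[OF r] by blast
    have "warped_dist mY \<phi> SG (t i) y y' / C - A \<le> warped_dist mX \<psi> SD (\<tau> i) (f y) (f y')"
      using qi_lower i y y' by blast
    also have "\<dots> \<le> real n" using wX.wd_word[OF \<tau>_pos[OF i(1)] a fM[OF y]] e by simp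
    finally have "warped_dist mY \<phi> SG (t i) y y' / C \<le> real n + A" by simp
    then have "warped_dist mY \<phi> SG (t i) y y' \<le> C * (real n + A)" using Cpos by (simp add: divide_le_eq mult.commute)
    then show "\<exists>z\<in>{y'}. warped_dist mY \<phi> SG r y z \<le> C * (real n + A)" using i by simp
  qed
  then obtain \<gamma> where g: "\<gamma> \<in> wY.Wle (nat \<lceil>C * (real n + A)\<rceil>)" "\<phi> \<gamma> y = y'" by blast
  have gG: "\<gamma> \<in> carrier G" using g wY.Wle_carrier by blast
  have "pi \<gamma> = a" using pi_unique[OF gG aD y] g e by simp
  then show ?thesis using g by blast
qed

lemma lift_carrier: "a \<in> carrier D \<Longrightarrow> y \<in> mspace mY \<Longrightarrow> y' \<in> mspace mY \<Longrightarrow> \<psi> a (f y) = f y' \<Longrightarrow>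
   \<exists>\<gamma>\<in>carrier G. y' = \<phi> \<gamma> y \<and> pi \<gamma> = a"
proof -
  assume a: "a \<in> carrier D" and r: "y \<in> mspace mY" "y' \<in> mspace mY" "\<psi> a (f y) = f y'"
  obtain n where "a \<in> wX.W n" using wX.carrier_W[OF a] by blast
  from lift[OF this r] show ?thesis using wY.Wle_carrier by blast
qed

abbreviation P where "P \<equiv> f ` mspace mY"
abbreviation F where "F \<equiv> kernel G D pi"

lemma Dp_eq: "{\<delta> \<in> carrier D. \<psi> \<delta> ` P = P} = pi ` carrier G"
proof
  show "pi ` carrier G \<subseteq> {\<delta> \<in> carrier D. \<psi> \<delta> ` P = P}"
  proof
    fix \<delta> assume "\<delta> \<in> pi ` carrier G"
    then obtain \<gamma> where g: "\<gamma> \<in> carrier G" "\<delta> = pi \<gamma>" by blast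
    have "\<psi> \<delta> ` P = P"
    proof
      show "\<psi> \<delta> ` P \<subseteq> P"
      proof
        fix x assume "x \<in> \<psi> \<delta> ` P"
        then obtain y where y: "y \<in> mspace mY" "x = \<psi> \<delta> (f y)" by blast
        then have "x = f (\<phi> \<gamma> y)" using pi_eq[OF g(1) y(1)] g by simp
        then show "x \<in> P" using wY.img[OF g(1) y(1)] by blast
      qed
      show "P \<subseteq> \<psi> \<delta> ` P"
      proof
        fix x assume "x \<in> P"
        then obtain y where y: "y \<in> mspace mY" "x = f y" by blast
        have ig: "inv\<^bsub>G\<^esub> \<gamma> \<in> carrier G" using g by simp
        have iy: "\<phi> (inv\<^bsub>G\<^esub> \<gamma>) y \<in> mspace mY" using wY.img[OF ig y(1)] .
        have "x = f (\<phi> \<gamma> (\<phi> (inv\<^bsub>G\<^esub> \<gamma>) y))" using wY.invact2[OF g(1) y(1)] y by simp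
        also have "\<dots> = \<psi> \<delta> (f (\<phi> (inv\<^bsub>G\<^esub> \<gamma>) y))" using pi_eq[OF g(1) iy] g by simp
        finally show "x \<in> \<psi> \<delta> ` P" using iy by blast
      qed
    qed
    then show "\<delta> \<in> {\<delta> \<in> carrier D. \<psi> \<delta> ` P = P}" using g pi_carrier by blast
  qed
next
  show "{\<delta> \<in> carrier D. \<psi> \<delta> ` P = P} \<subseteq> pi ` carrier G"
  proof
    fix \<delta> assume d: "\<delta> \<in> {\<delta> \<in> carrier D. \<psi> \<delta> ` P = P}"
    obtain y0 where y0: "y0 \<in> mspace mY" using MY_ne by blast
    have "\<psi> \<delta> (f y0) \<in> P" using d y0 by blast
    then obtain y' where y': "y' \<in> mspace mY" "\<psi> \<delta> (f y0) = f y'" by blast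
    obtain \<gamma> where "\<gamma> \<in> carrier G" "pi \<gamma> = \<delta>" using lift_carrier[OF _ y0 y'] d by blast
    then show "\<delta> \<in> pi ` carrier G" by blast
  qed
qed

lemma F_finite: "finite F"
proof -
  obtain y0 where y0: "y0 \<in> mspace mY" "free_point G \<phi> y0" using MY_ne by blast
  have "F \<subseteq> wY.Wle (nat \<lceil>C * (real 0 + A)\<rceil>)"
  proof
    fix \<gamma> assume g: "\<gamma> \<in> F"
    then have gG: "\<gamma> \<in> carrier G" and p1: "pi \<gamma> = \<one>\<^bsub>D\<^esub>" unfolding kernel_def by auto
    have gy: "\<phi> \<gamma> y0 \<in> mspace mY" using wY.img[OF gG y0(1)] .
    have "\<psi> \<one>\<^bsub>D\<^esub> (f y0) = f (\<phi> \<gamma> y0)" using pi_eq[OF gG y0(1)] p1 by simp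
    moreover have "\<one>\<^bsub>D\<^esub> \<in> wX.W 0" by simp
    ultimately obtain \<eta> where e: "\<eta> \<in> wY.Wle (nat \<lceil>C * (real 0 + A)\<rceil>)" "\<phi> \<gamma> y0 = \<phi> \<eta> y0"
      using lift[OF _ y0(1) gy] by blast
    have "\<gamma> = \<eta>" using freeY0[OF y0 gG _ e(2)] e(1) wY.Wle_carrier by blast
    then show "\<gamma> \<in> wY.Wle (nat \<lceil>C * (real 0 + A)\<rceil>)" using e by simp
  qed
  then show ?thesis using wY.Wle_fin finite_subset by blast
qed

lemma fibers: "y \<in> mspace mY \<Longrightarrow> y' \<in> mspace mY \<Longrightarrow> f y = f y' \<longleftrightarrow> (\<exists>g\<in>F. y' = \<phi> g y)"
proof
  assume y: "y \<in> mspace mY" and y': "y' \<in> mspace mY" and e: "f y = f y'"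
  have "\<psi> \<one>\<^bsub>D\<^esub> (f y) = f y'" using wX.one[OF fM[OF y]] e by simp
  then obtain \<gamma> where "\<gamma> \<in> carrier G" "y' = \<phi> \<gamma> y" "pi \<gamma> = \<one>\<^bsub>D\<^esub>" using lift_carrier[OF _ y y'] by auto
  then show "\<exists>g\<in>F. y' = \<phi> g y" unfolding kernel_def by blast
next
  assume y: "y \<in> mspace mY" and y': "y' \<in> mspace mY" and "\<exists>g\<in>F. y' = \<phi> g y"
  then obtain g where g: "g \<in> carrier G" "pi g = \<one>\<^bsub>D\<^esub>" "y' = \<phi> g y" unfolding kernel_def by blast
  then show "f y = f y'" using pi_eq[OF g(1) y] wX.one[OF fM[OF y]] by simp
qed

end


context mctx
begin

definition q :: "'y \<Rightarrow> 'y set" where "q y = {\<phi> g y | g. g \<in> F}"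
definition h :: "'x \<Rightarrow> 'y set" where "h x = {z \<in> mspace mY. f z = x}"

lemma q_alt: "y \<in> mspace mY \<Longrightarrow> q y = h (f y)"
proof -
  assume y: "y \<in> mspace mY"
  show ?thesis unfolding q_def h_def
  proof (rule equalityI; rule subsetI)
    fix z assume "z \<in> {\<phi> g y | g. g \<in> F}"
    then obtain g where g: "g \<in> F" "z = \<phi> g y" by blast
    have gG: "g \<in> carrier G" using g unfolding kernel_def by simp
    have zM: "z \<in> mspace mY" using wY.img[OF gG y] g by simp
    have "f y = f z" using fibers[OF y zM] g by blast
    then show "z \<in> {z \<in> mspace mY. f z = f y}" using zM by simp
  next
    fix z assume "z \<in> {z \<in> mspace mY. f z = f y}"
    then have z: "z \<in> mspace mY" "f y = f z" by auto
    then obtain g where "g \<in> F" "z = \<phi> g y" using fibers[OF y z(1)] by blast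
    then show "z \<in> {\<phi> g y | g. g \<in> F}" by blast
  qed
qed

definition Qt :: "'y set topology" where
  "Qt = topology (\<lambda>U. U \<subseteq> q ` mspace mY \<and> openin (mtopology_of mY) {y \<in> mspace mY. q y \<in> U})"

lemma Qt_istop: "istopology (\<lambda>U. U \<subseteq> q ` mspace mY \<and> openin (mtopology_of mY) {y \<in> mspace mY. q y \<in> U})"
  unfolding istopology_def
proof (rule conjI; intro allI impI)
  fix S T assume S: "S \<subseteq> q ` mspace mY \<and> openin (mtopology_of mY) {y \<in> mspace mY. q y \<in> S}"
    and T: "T \<subseteq> q ` mspace mY \<and> openin (mtopology_of mY) {y \<in> mspace mY. q y \<in> T}"
  have "{y \<in> mspace mY. q y \<in> S \<inter> T} = {y \<in> mspace mY. q y \<in> S} \<inter> {y \<in> mspace mY. q y \<in> T}" by blast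
  then show "S \<inter> T \<subseteq> q ` mspace mY \<and> openin (mtopology_of mY) {y \<in> mspace mY. q y \<in> S \<inter> T}"
    using S T openin_Int by auto
next
  fix K assume K: "\<forall>U\<in>K. U \<subseteq> q ` mspace mY \<and> openin (mtopology_of mY) {y \<in> mspace mY. q y \<in> U}"
  have "{y \<in> mspace mY. q y \<in> \<Union>K} = \<Union>((\<lambda>U. {y \<in> mspace mY. q y \<in> U}) ` K)" by blast
  moreover have "openin (mtopology_of mY) (\<Union>((\<lambda>U. {y \<in> mspace mY. q y \<in> U}) ` K))"
    using K by (intro openin_Union) blast
  ultimately show "\<Union>K \<subseteq> q ` mspace mY \<and> openin (mtopology_of mY) {y \<in> mspace mY. q y \<in> \<Union>K}"
    using K by auto
qed

lemma openin_Qt: "openin Qt U \<longleftrightarrow> U \<subseteq> q ` mspace mY \<and> openin (mtopology_of mY) {y \<in> mspace mY. q y \<in> U}"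
  unfolding Qt_def topology_inverse'[OF Qt_istop] by simp

lemma topspace_Qt: "topspace Qt = q ` mspace mY"
proof
  show "topspace Qt \<subseteq> q ` mspace mY" unfolding topspace_def using openin_Qt by blast
  have "{y \<in> mspace mY. q y \<in> q ` mspace mY} = topspace (mtopology_of mY)" by auto
  moreover have "openin (mtopology_of mY) (topspace (mtopology_of mY))" by (rule openin_topspace)
  ultimately have "openin Qt (q ` mspace mY)" using openin_Qt by simp
  then show "q ` mspace mY \<subseteq> topspace Qt" by (rule openin_subset)
qed

lemma quot_q: "quotient_map (mtopology_of mY) Qt q"
  unfolding quotient_map_def
proof (intro conjI allI impI)
  show "q ` topspace (mtopology_of mY) = topspace Qt" using topspace_Qt by simp
  fix U assume "U \<subseteq> topspace Qt"
  then show "openin (mtopology_of mY) {x \<in> topspace (mtopology_of mY). q x \<in> U} = openin Qt U"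
    using topspace_Qt openin_Qt by simp
qed

lemma quot_f: "quotient_map (mtopology_of mY) (subtopology (mtopology_of mX) P) f"
proof (rule continuous_closed_imp_quotient_map)
  show c: "continuous_map (mtopology_of mY) (subtopology (mtopology_of mX) P) f"
    using f_cont by (simp add: continuous_map_in_subtopology)
  show "closed_map (mtopology_of mY) (subtopology (mtopology_of mX) P) f"
    by (rule T1_Spaces.continuous_imp_closed_map[OF c Ycomp Hausdorff_space_subtopology[OF HausX]])
  show "f ` topspace (mtopology_of mY) = topspace (subtopology (mtopology_of mX) P)"
    using fM by auto
qed

lemma h_homeo: "homeomorphic_map (subtopology (mtopology_of mX) P) Qt h"
  unfolding homeomorphic_map_def
proof
  have "quotient_map (mtopology_of mY) Qt (h \<circ> f)"
    by (rule quotient_map_eq[OF quot_q]) (simp add: q_alt)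
  then show "quotient_map (subtopology (mtopology_of mX) P) Qt h"
    using quotient_map_compose_eq[OF quot_f] by blast
  show "inj_on h (topspace (subtopology (mtopology_of mX) P))"
  proof (rule inj_onI)
    fix x x' assume x: "x \<in> topspace (subtopology (mtopology_of mX) P)" and x': "x' \<in> topspace (subtopology (mtopology_of mX) P)"
      and e: "h x = h x'"
    obtain y where y: "y \<in> mspace mY" "x = f y" using x by auto
    obtain y' where y': "y' \<in> mspace mY" "x' = f y'" using x' by auto
    have "y' \<in> h x'" unfolding h_def using y' by simp
    then have "y' \<in> h x" using e by simp
    then show "x = x'" unfolding h_def using y' by simp
  qed
qed

lemma h_conj: "\<gamma> \<in> carrier G \<Longrightarrow> x \<in> P \<Longrightarrow> h (\<psi> (pi \<gamma>) x) = \<phi> \<gamma> ` h x"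
proof -
  assume g: "\<gamma> \<in> carrier G" and "x \<in> P"
  then obtain y where y: "y \<in> mspace mY" "x = f y" by blast
  have pg: "pi \<gamma> \<in> carrier D" using pi_carrier[OF g] .
  show ?thesis
  proof (rule equalityI; rule subsetI)
    fix w assume "w \<in> h (\<psi> (pi \<gamma>) x)"
    then have w: "w \<in> mspace mY" "f w = \<psi> (pi \<gamma>) (f y)" unfolding h_def using y by auto
    have ig: "inv\<^bsub>G\<^esub> \<gamma> \<in> carrier G" using g by simp
    define z where "z = \<phi> (inv\<^bsub>G\<^esub> \<gamma>) w"
    have zM: "z \<in> mspace mY" unfolding z_def using wY.img[OF ig w(1)] .
    have wz: "w = \<phi> \<gamma> z" unfolding z_def using wY.invact2[OF g w(1)] by simp
    have "\<psi> (pi \<gamma>) (f z) = \<psi> (pi \<gamma>) (f y)" using pi_eq[OF g zM] wz w(2) by simp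
    then have "\<psi> (inv\<^bsub>D\<^esub> pi \<gamma>) (\<psi> (pi \<gamma>) (f z)) = \<psi> (inv\<^bsub>D\<^esub> pi \<gamma>) (\<psi> (pi \<gamma>) (f y))" by simp
    then have "f z = f y" using wX.invact[OF pg fM[OF zM]] wX.invact[OF pg fM[OF y(1)]] by simp
    then have "z \<in> h x" unfolding h_def using zM y by simp
    then show "w \<in> \<phi> \<gamma> ` h x" using wz by blast
  next
    fix w assume "w \<in> \<phi> \<gamma> ` h x"
    then obtain z where z: "z \<in> mspace mY" "f z = f y" "w = \<phi> \<gamma> z" unfolding h_def using y by auto
    have "f w = \<psi> (pi \<gamma>) x" using pi_eq[OF g z(1)] z y by simp
    then show "w \<in> h (\<psi> (pi \<gamma>) x)" unfolding h_def using wY.img[OF g z(1)] z by simp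
  qed
qed

end

context mctx
begin

abbreviation Dp where "Dp \<equiv> {\<delta> \<in> carrier D. \<psi> \<delta> ` P = P}"

lemma Dp_sub: "subgroup Dp D"
  unfolding Dp_eq by (rule group_hom.img_is_subgroup[OF pi_group_hom])

lemma P_compact: "compactin (mtopology_of mX) P"
proof -
  have "compactin (mtopology_of mY) (topspace (mtopology_of mY))" using Ycomp compact_space_def by blast
  then show ?thesis using image_compactin[OF _ f_cont] by fastforce
qed

lemma P_connected: "connectedin (mtopology_of mX) P"
proof -
  have "connectedin (mtopology_of mY) (topspace (mtopology_of mY))" using Yconn connectedin_topspace by blast
  then show ?thesis using connectedin_continuous_map_image[OF f_cont] by fastforce
qed

lemma P_sub: "P \<subseteq> mspace mX" using fM by blast

definition T :: "'d \<Rightarrow> 'x set" where "T a = \<psi> a ` P"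

lemma T_compact: "a \<in> carrier D \<Longrightarrow> compactin (mtopology_of mX) (T a)"
  unfolding T_def using image_compactin[OF P_compact wX.contg] by blast

lemma T_closed: "a \<in> carrier D \<Longrightarrow> closedin (mtopology_of mX) (T a)"
  using compactin_imp_closedin[OF HausX T_compact] by blast

lemma T_connected: "a \<in> carrier D \<Longrightarrow> connectedin (mtopology_of mX) (T a)"
  unfolding T_def using connectedin_continuous_map_image[OF wX.contg P_connected] by blast

lemma T_sub: "a \<in> carrier D \<Longrightarrow> T a \<subseteq> mspace mX"
  unfolding T_def using wX.img P_sub by blast

lemma T_one: "T \<one>\<^bsub>D\<^esub> = P"
  unfolding T_def using wX.one P_sub by (auto simp: subset_iff image_iff)

lemma T_comp: "a \<in> carrier D \<Longrightarrow> b \<in> carrier D \<Longrightarrow> \<psi> a ` T b = T (a \<otimes>\<^bsub>D\<^esub> b)"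
proof -
  assume a: "a \<in> carrier D" and b: "b \<in> carrier D"
  have *: "\<And>x. x \<in> P \<Longrightarrow> \<psi> a (\<psi> b x) = \<psi> (a \<otimes>\<^bsub>D\<^esub> b) x" using wX.comp[OF a b] P_sub by auto
  show ?thesis unfolding T_def
  proof (rule equalityI; rule subsetI)
    fix z assume "z \<in> \<psi> a ` \<psi> b ` P"
    then obtain x where "x \<in> P" "z = \<psi> a (\<psi> b x)" by blast
    then show "z \<in> \<psi> (a \<otimes>\<^bsub>D\<^esub> b) ` P" using * by blast
  next
    fix z assume "z \<in> \<psi> (a \<otimes>\<^bsub>D\<^esub> b) ` P"
    then obtain x where "x \<in> P" "z = \<psi> (a \<otimes>\<^bsub>D\<^esub> b) x" by blast
    then show "z \<in> \<psi> a ` \<psi> b ` P" using * by (metis imageI)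
  qed
qed

lemma T_Dp: "a \<in> carrier D \<Longrightarrow> a \<in> Dp \<longleftrightarrow> T a = P"
  unfolding T_def by simp

lemma T_meet: "a \<in> carrier D \<Longrightarrow> T a \<inter> P \<noteq> {} \<Longrightarrow> T a = P"
proof -
  assume a: "a \<in> carrier D" and ne: "T a \<inter> P \<noteq> {}"
  then obtain x where x: "x \<in> T a" "x \<in> P" by blast
  obtain y where y1: "y \<in> mspace mY" "x = \<psi> a (f y)" using x(1) unfolding T_def by blast
  obtain y' where y2: "y' \<in> mspace mY" "x = f y'" using x(2) by blast
  have y: "y \<in> mspace mY" "y' \<in> mspace mY" "\<psi> a (f y) = f y'" using y1 y2 by auto
  obtain \<gamma> where g: "\<gamma> \<in> carrier G" "pi \<gamma> = a" using lift_carrier[OF a y(1) y(2) y(3)] by blast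
  have "a \<in> pi ` carrier G" using imageI[of \<gamma> "carrier G" pi] g by simp
  then have "a \<in> Dp" unfolding Dp_eq[symmetric] .
  then show ?thesis unfolding T_def by simp
qed

lemma T_dich: "a \<in> carrier D \<Longrightarrow> b \<in> carrier D \<Longrightarrow> T a \<inter> T b \<noteq> {} \<Longrightarrow> T a = T b"
proof -
  assume a: "a \<in> carrier D" and b: "b \<in> carrier D" and ne: "T a \<inter> T b \<noteq> {}"
  define c where "c = inv\<^bsub>D\<^esub> b \<otimes>\<^bsub>D\<^esub> a"
  have ib: "inv\<^bsub>D\<^esub> b \<in> carrier D" using b by simp
  have c: "c \<in> carrier D" unfolding c_def using ib a by simp
  have Tc: "T c = \<psi> (inv\<^bsub>D\<^esub> b) ` T a" unfolding c_def using T_comp[OF ib a] by simp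
  have "\<psi> (inv\<^bsub>D\<^esub> b) ` T b = T (inv\<^bsub>D\<^esub> b \<otimes>\<^bsub>D\<^esub> b)" using T_comp[OF ib b] .
  also have "\<dots> = P" using b T_one by simp
  finally have "\<psi> (inv\<^bsub>D\<^esub> b) ` T b = P" .
  obtain x where x: "x \<in> T a" "x \<in> T b" using ne by blast
  have "\<psi> (inv\<^bsub>D\<^esub> b) x \<in> T c" using Tc x(1) by simp
  moreover have "\<psi> (inv\<^bsub>D\<^esub> b) x \<in> P" using x(2) \<open>\<psi> (inv\<^bsub>D\<^esub> b) ` T b = P\<close> by blast
  ultimately have "T c \<inter> P \<noteq> {}" by blast
  then have "T c = P" using T_meet[OF c] by blast
  then have "\<psi> b ` T c = \<psi> b ` P" by simp
  moreover have "\<psi> b ` T c = T (b \<otimes>\<^bsub>D\<^esub> c)" using T_comp[OF b c] .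
  moreover have "b \<otimes>\<^bsub>D\<^esub> c = a" unfolding c_def using a b
    by (simp add: wX.m_assoc[symmetric])
  ultimately show ?thesis unfolding T_def by simp
qed

abbreviation NA where "NA \<equiv> nat \<lceil>A\<rceil>"

lemma X_cover: "x \<in> mspace mX \<Longrightarrow> \<exists>\<eta>\<in>wX.Wle NA. x \<in> T (inv\<^bsub>D\<^esub> \<eta>)"
proof -
  assume x: "x \<in> mspace mX"
  have "\<exists>\<eta>\<in>wX.Wle NA. \<psi> \<eta> x \<in> P"
  proof (rule wX.approx[OF x compactin_imp_closedin[OF HausX P_compact] A])
    fix r :: real assume r: "r > 0"
    obtain i where i: "i \<in> I" "\<tau> i = r" using \<tau>_hit[OF r] by blast
    obtain y where y: "y \<in> mspace mY" "warped_dist mX \<psi> SD (\<tau> i) (f y) x \<le> A" using qi_dense i x by blast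
    have "warped_dist mX \<psi> SD r x (f y) \<le> A" using y(2) i(2) wX.wd_sym[of r x "f y"] by simp
    then show "\<exists>z\<in>P. warped_dist mX \<psi> SD r x z \<le> A" using y(1) by blast
  qed
  then obtain \<eta> where e: "\<eta> \<in> wX.Wle NA" "\<psi> \<eta> x \<in> P" by blast
  have eD: "\<eta> \<in> carrier D" using e wX.Wle_carrier by blast
  have "x = \<psi> (inv\<^bsub>D\<^esub> \<eta>) (\<psi> \<eta> x)" using wX.invact[of \<eta> x] eD x by simp
  then have "x \<in> T (inv\<^bsub>D\<^esub> \<eta>)" unfolding T_def using e by blast
  then show ?thesis using e by blast
qed

lemma T_open: "a \<in> carrier D \<Longrightarrow> openin (mtopology_of mX) (T a)"
proof -
  assume a: "a \<in> carrier D"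
  define R where "R = {T (inv\<^bsub>D\<^esub> \<eta>) | \<eta>. \<eta> \<in> wX.Wle NA \<and> T (inv\<^bsub>D\<^esub> \<eta>) \<noteq> T a}"
  have finR: "finite R"
  proof -
    have "R \<subseteq> (\<lambda>\<eta>. T (inv\<^bsub>D\<^esub> \<eta>)) ` wX.Wle NA" unfolding R_def by blast
    then show ?thesis using wX.Wle_fin finite_surj by blast
  qed
  have clR: "closedin (mtopology_of mX) (\<Union>R)"
  proof (rule closedin_Union[OF finR])
    fix S assume "S \<in> R"
    then obtain \<eta> where "\<eta> \<in> wX.Wle NA" "S = T (inv\<^bsub>D\<^esub> \<eta>)" unfolding R_def by blast
    then show "closedin (mtopology_of mX) S" using T_closed wX.Wle_carrier by blast
  qed
  have eq: "topspace (mtopology_of mX) - T a = \<Union>R"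
  proof (rule equalityI; rule subsetI)
    fix x assume x: "x \<in> topspace (mtopology_of mX) - T a"
    then obtain \<eta> where e: "\<eta> \<in> wX.Wle NA" "x \<in> T (inv\<^bsub>D\<^esub> \<eta>)" using X_cover by auto
    then have "T (inv\<^bsub>D\<^esub> \<eta>) \<noteq> T a" using x by blast
    then show "x \<in> \<Union>R" unfolding R_def using e by blast
  next
    fix x assume "x \<in> \<Union>R"
    then obtain \<eta> where e: "\<eta> \<in> wX.Wle NA" "T (inv\<^bsub>D\<^esub> \<eta>) \<noteq> T a" "x \<in> T (inv\<^bsub>D\<^esub> \<eta>)" unfolding R_def by blast
    have ie: "inv\<^bsub>D\<^esub> \<eta> \<in> carrier D" using e wX.Wle_carrier by blast
    have "T (inv\<^bsub>D\<^esub> \<eta>) \<inter> T a = {}" using T_dich[OF ie a] e by blast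
    then show "x \<in> topspace (mtopology_of mX) - T a" using e T_sub[OF ie] by auto
  qed
  show ?thesis using clR eq T_sub[OF a] by (simp add: openin_closedin_eq)
qed

lemma P_ne: "P \<noteq> {}" using MY_ne by blast

lemma T_ne: "a \<in> carrier D \<Longrightarrow> T a \<noteq> {}" unfolding T_def using P_ne by blast

lemma T_comp_in: "a \<in> carrier D \<Longrightarrow> T a \<in> connected_components_of (mtopology_of mX)"
proof -
  assume a: "a \<in> carrier D"
  obtain x where "x \<in> T a" using T_ne[OF a] by blast
  then show ?thesis using clopen_component[OF T_connected[OF a] T_closed[OF a] T_open[OF a]] by blast
qed

lemma comps_eq: "connected_components_of (mtopology_of mX) = T ` carrier D"
proof (rule equalityI; rule subsetI)
  fix K assume K: "K \<in> connected_components_of (mtopology_of mX)"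
  obtain x where x: "x \<in> K" using nonempty_connected_components_of[OF K] by blast
  have xM: "x \<in> mspace mX" using connected_components_of_subset[OF K] x by auto
  obtain \<eta> where e: "\<eta> \<in> wX.Wle NA" "x \<in> T (inv\<^bsub>D\<^esub> \<eta>)" using X_cover[OF xM] by blast
  have ie: "inv\<^bsub>D\<^esub> \<eta> \<in> carrier D" using e wX.Wle_carrier by blast
  have "K \<inter> T (inv\<^bsub>D\<^esub> \<eta>) \<noteq> {}" using x e by blast
  then have "K = T (inv\<^bsub>D\<^esub> \<eta>)" using connected_components_of_overlap[OF K T_comp_in[OF ie]] by blast
  then show "K \<in> T ` carrier D" using ie by blast
next
  fix K assume "K \<in> T ` carrier D"
  then show "K \<in> connected_components_of (mtopology_of mX)" using T_comp_in by blast
qed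

lemma comps_finite: "finite (T ` carrier D)"
proof -
  have "T ` carrier D \<subseteq> (\<lambda>\<eta>. T (inv\<^bsub>D\<^esub> \<eta>)) ` wX.Wle NA"
  proof
    fix K assume "K \<in> T ` carrier D"
    then obtain a where a: "a \<in> carrier D" "K = T a" by blast
    obtain x where x: "x \<in> T a" using T_ne[OF a(1)] by blast
    obtain \<eta> where e: "\<eta> \<in> wX.Wle NA" "x \<in> T (inv\<^bsub>D\<^esub> \<eta>)" using X_cover T_sub[OF a(1)] x by blast
    have ie: "inv\<^bsub>D\<^esub> \<eta> \<in> carrier D" using e wX.Wle_carrier by blast
    have "T a = T (inv\<^bsub>D\<^esub> \<eta>)" using T_dich[OF a(1) ie] x e by blast
    then show "K \<in> (\<lambda>\<eta>. T (inv\<^bsub>D\<^esub> \<eta>)) ` wX.Wle NA" using a e by blast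
  qed
  then show ?thesis using wX.Wle_fin finite_surj by blast
qed

lemma T_inv_eq: "a \<in> carrier D \<Longrightarrow> b \<in> carrier D \<Longrightarrow> T (inv\<^bsub>D\<^esub> a) = T (inv\<^bsub>D\<^esub> b) \<longleftrightarrow> b \<otimes>\<^bsub>D\<^esub> inv\<^bsub>D\<^esub> a \<in> Dp"
proof -
  assume a: "a \<in> carrier D" and b: "b \<in> carrier D"
  have ia: "inv\<^bsub>D\<^esub> a \<in> carrier D" and ib: "inv\<^bsub>D\<^esub> b \<in> carrier D" using a b by auto
  have c: "b \<otimes>\<^bsub>D\<^esub> inv\<^bsub>D\<^esub> a \<in> carrier D" using b ia by simp
  have e1: "\<psi> b ` T (inv\<^bsub>D\<^esub> a) = T (b \<otimes>\<^bsub>D\<^esub> inv\<^bsub>D\<^esub> a)" using T_comp[OF b ia] .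
  have e2: "\<psi> b ` T (inv\<^bsub>D\<^esub> b) = P" using T_comp[OF b ib] T_one b by simp
  have e3: "\<psi> (inv\<^bsub>D\<^esub> b) ` T (b \<otimes>\<^bsub>D\<^esub> inv\<^bsub>D\<^esub> a) = T (inv\<^bsub>D\<^esub> a)"
    using T_comp[OF ib c] b ia by (simp add: wX.m_assoc[symmetric])
  have e4: "\<psi> (inv\<^bsub>D\<^esub> b) ` P = T (inv\<^bsub>D\<^esub> b)" unfolding T_def ..
  show ?thesis
  proof
    assume "T (inv\<^bsub>D\<^esub> a) = T (inv\<^bsub>D\<^esub> b)"
    then have "T (b \<otimes>\<^bsub>D\<^esub> inv\<^bsub>D\<^esub> a) = P" using e1 e2 by simp
    then show "b \<otimes>\<^bsub>D\<^esub> inv\<^bsub>D\<^esub> a \<in> Dp" using T_Dp[OF c] by simp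
  next
    assume "b \<otimes>\<^bsub>D\<^esub> inv\<^bsub>D\<^esub> a \<in> Dp"
    then have "T (b \<otimes>\<^bsub>D\<^esub> inv\<^bsub>D\<^esub> a) = P" using T_Dp[OF c] by simp
    then show "T (inv\<^bsub>D\<^esub> a) = T (inv\<^bsub>D\<^esub> b)" using e3 e4 by simp
  qed
qed

lemma rcos_eq: "a \<in> carrier D \<Longrightarrow> b \<in> carrier D \<Longrightarrow> Dp #>\<^bsub>D\<^esub> a = Dp #>\<^bsub>D\<^esub> b \<longleftrightarrow> b \<otimes>\<^bsub>D\<^esub> inv\<^bsub>D\<^esub> a \<in> Dp"
proof -
  assume a: "a \<in> carrier D" and b: "b \<in> carrier D"
  have "Dp #>\<^bsub>D\<^esub> a = Dp #>\<^bsub>D\<^esub> b \<longleftrightarrow> b \<in> Dp #>\<^bsub>D\<^esub> a"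
    using wX.repr_independence[OF _ a Dp_sub] wX.repr_independenceD[OF Dp_sub b] by blast
  also have "\<dots> \<longleftrightarrow> b \<otimes>\<^bsub>D\<^esub> inv\<^bsub>D\<^esub> a \<in> Dp" using subgroup.rcos_module[OF Dp_sub D a b] .
  finally show ?thesis .
qed

lemma comps_card: "card (connected_components_of (mtopology_of mX)) = card (rcosets\<^bsub>D\<^esub> Dp) \<and> finite (rcosets\<^bsub>D\<^esub> Dp)"
proof -
  have c1: "T ` carrier D = (\<lambda>a. T (inv\<^bsub>D\<^esub> a)) ` carrier D"
  proof (rule equalityI; rule subsetI)
    fix K assume "K \<in> T ` carrier D"
    then obtain a where a: "a \<in> carrier D" "K = T a" by blast
    then have "K = T (inv\<^bsub>D\<^esub> (inv\<^bsub>D\<^esub> a))" by simp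
    then show "K \<in> (\<lambda>a. T (inv\<^bsub>D\<^esub> a)) ` carrier D" using a by blast
  next
    fix K assume "K \<in> (\<lambda>a. T (inv\<^bsub>D\<^esub> a)) ` carrier D"
    then show "K \<in> T ` carrier D" by auto
  qed
  have c2: "rcosets\<^bsub>D\<^esub> Dp = (\<lambda>a. Dp #>\<^bsub>D\<^esub> a) ` carrier D" unfolding RCOSETS_def by blast
  have "card ((\<lambda>a. T (inv\<^bsub>D\<^esub> a)) ` carrier D) = card ((\<lambda>a. Dp #>\<^bsub>D\<^esub> a) ` carrier D) \<and>
        (finite ((\<lambda>a. T (inv\<^bsub>D\<^esub> a)) ` carrier D) \<longleftrightarrow> finite ((\<lambda>a. Dp #>\<^bsub>D\<^esub> a) ` carrier D))"
    by (rule card_eq_images) (simp add: T_inv_eq rcos_eq)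
  then show ?thesis using comps_eq comps_finite c1 c2 by simp
qed

lemma comps_trans: "K1 \<in> connected_components_of (mtopology_of mX) \<Longrightarrow> K2 \<in> connected_components_of (mtopology_of mX) \<Longrightarrow>
   \<exists>\<delta>\<in>carrier D. \<psi> \<delta> ` K1 = K2"
proof -
  assume "K1 \<in> connected_components_of (mtopology_of mX)" "K2 \<in> connected_components_of (mtopology_of mX)"
  then obtain a b where ab: "a \<in> carrier D" "b \<in> carrier D" "K1 = T a" "K2 = T b" using comps_eq by auto
  have ia: "inv\<^bsub>D\<^esub> a \<in> carrier D" using ab by simp
  have c: "b \<otimes>\<^bsub>D\<^esub> inv\<^bsub>D\<^esub> a \<in> carrier D" using ab ia by simp
  have "\<psi> (b \<otimes>\<^bsub>D\<^esub> inv\<^bsub>D\<^esub> a) ` K1 = T (b \<otimes>\<^bsub>D\<^esub> inv\<^bsub>D\<^esub> a \<otimes>\<^bsub>D\<^esub> a)" using T_comp[OF c ab(1)] ab by simp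
  also have "\<dots> = K2" using ab ia by (simp add: wX.m_assoc)
  finally show ?thesis using c by blast
qed

end

context mctx
begin

lemma particular: "homeomorphic_map (mtopology_of mY) (mtopology_of mX) f \<Longrightarrow>
  \<exists>\<pi>. \<pi> \<in> iso G D \<and> (\<forall>\<gamma>\<in>carrier G. \<forall>y\<in>mspace mY. f (\<phi> \<gamma> y) = \<psi> (\<pi> \<gamma>) (f y))"
proof -
  assume hm: "homeomorphic_map (mtopology_of mY) (mtopology_of mX) f"
  have PX: "P = mspace mX" using homeomorphic_imp_surjective_map[OF hm] by simp
  have injf: "inj_on f (mspace mY)" using homeomorphic_imp_injective_map[OF hm] by simp
  obtain y0 where y0: "y0 \<in> mspace mY" "free_point G \<phi> y0" using MY_ne by blast
  have "pi \<in> iso G D"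
    unfolding group_hom.iso_iff[OF pi_group_hom]
  proof (intro conjI ballI impI)
    show "carrier D \<subseteq> pi ` carrier G"
    proof
      fix \<delta> assume d: "\<delta> \<in> carrier D"
      have "\<psi> \<delta> ` mspace mX = mspace mX"
      proof
        show "\<psi> \<delta> ` mspace mX \<subseteq> mspace mX" using wX.img[OF d] by blast
        show "mspace mX \<subseteq> \<psi> \<delta> ` mspace mX"
        proof
          fix x assume x: "x \<in> mspace mX"
          have id: "inv\<^bsub>D\<^esub> \<delta> \<in> carrier D" using d by simp
          have "x = \<psi> \<delta> (\<psi> (inv\<^bsub>D\<^esub> \<delta>) x)" using wX.invact2[OF d x] by simp
          then show "x \<in> \<psi> \<delta> ` mspace mX" using wX.img[OF id x] by blast
        qed
      qed
      then have "\<delta> \<in> Dp" using d PX by simp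
      then show "\<delta> \<in> pi ` carrier G" unfolding Dp_eq .
    qed
  next
    fix \<gamma> assume g: "\<gamma> \<in> carrier G" and p1: "pi \<gamma> = \<one>\<^bsub>D\<^esub>"
    have gy: "\<phi> \<gamma> y0 \<in> mspace mY" using wY.img[OF g y0(1)] .
    have "f (\<phi> \<gamma> y0) = f y0" using pi_eq[OF g y0(1)] p1 wX.one[OF fM[OF y0(1)]] by simp
    then have "\<phi> \<gamma> y0 = y0" using injf gy y0(1) inj_on_def by metis
    then show "\<gamma> = \<one>\<^bsub>G\<^esub>" using y0(2) g unfolding free_point_def by blast
  qed
  then show ?thesis using pi_eq by blast
qed

lemma main:
  "finite (rcosets\<^bsub>D\<^esub> Dp) \<and>
    (\<exists>(F :: 'g set) (\<pi> :: 'g \<Rightarrow> 'd) (h :: 'x \<Rightarrow> 'y set) (Q :: 'y set topology).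
       \<pi> \<in> hom G D \<and> \<pi> ` carrier G = Dp \<and> F = kernel G D \<pi> \<and> finite F \<and>
       quotient_map (mtopology_of mY) Q (\<lambda>y. {\<phi> g y | g. g \<in> F}) \<and>
       homeomorphic_map (subtopology (mtopology_of mX) (f ` mspace mY)) Q h \<and>
       (\<forall>y\<in>mspace mY. h (f y) = {\<phi> g y | g. g \<in> F}) \<and>
       (\<forall>\<gamma>\<in>carrier G. \<forall>x\<in>f ` mspace mY. h (\<psi> (\<pi> \<gamma>) x) = \<phi> \<gamma> ` h x) \<and>
       f ` mspace mY \<in> connected_components_of (mtopology_of mX) \<and>
       card (connected_components_of (mtopology_of mX)) = card (rcosets\<^bsub>D\<^esub> Dp) \<and>
       (\<forall>K1\<in>connected_components_of (mtopology_of mX).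
          \<forall>K2\<in>connected_components_of (mtopology_of mX).
            \<exists>\<delta>\<in>carrier D. \<psi> \<delta> ` K1 = K2)) \<and>
    (homeomorphic_map (mtopology_of mY) (mtopology_of mX) f \<longrightarrow>
       (\<exists>\<pi>. \<pi> \<in> iso G D \<and>
          (\<forall>\<gamma>\<in>carrier G. \<forall>y\<in>mspace mY. f (\<phi> \<gamma> y) = \<psi> (\<pi> \<gamma>) (f y))))"
proof (intro conjI impI)
  show "finite (rcosets\<^bsub>D\<^esub> Dp)" using comps_card by blast
  show "homeomorphic_map (mtopology_of mY) (mtopology_of mX) f \<Longrightarrow>
       \<exists>\<pi>. \<pi> \<in> iso G D \<and> (\<forall>\<gamma>\<in>carrier G. \<forall>y\<in>mspace mY. f (\<phi> \<gamma> y) = \<psi> (\<pi> \<gamma>) (f y))"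
    by (rule particular)
  have qeq: "q = (\<lambda>y. {\<phi> g y | g. g \<in> F})" unfolding q_def by (rule ext) simp
  have Pc: "P \<in> connected_components_of (mtopology_of mX)" using T_comp_in[of "\<one>\<^bsub>D\<^esub>"] T_one by simp
  have hq: "\<forall>y\<in>mspace mY. h (f y) = {\<phi> g y | g. g \<in> F}" using q_alt unfolding q_def by simp
  show "\<exists>(F :: 'g set) (\<pi> :: 'g \<Rightarrow> 'd) (h :: 'x \<Rightarrow> 'y set) (Q :: 'y set topology).
       \<pi> \<in> hom G D \<and> \<pi> ` carrier G = Dp \<and> F = kernel G D \<pi> \<and> finite F \<and>
       quotient_map (mtopology_of mY) Q (\<lambda>y. {\<phi> g y | g. g \<in> F}) \<and>
       homeomorphic_map (subtopology (mtopology_of mX) (f ` mspace mY)) Q h \<and>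
       (\<forall>y\<in>mspace mY. h (f y) = {\<phi> g y | g. g \<in> F}) \<and>
       (\<forall>\<gamma>\<in>carrier G. \<forall>x\<in>f ` mspace mY. h (\<psi> (\<pi> \<gamma>) x) = \<phi> \<gamma> ` h x) \<and>
       f ` mspace mY \<in> connected_components_of (mtopology_of mX) \<and>
       card (connected_components_of (mtopology_of mX)) = card (rcosets\<^bsub>D\<^esub> Dp) \<and>
       (\<forall>K1\<in>connected_components_of (mtopology_of mX).
          \<forall>K2\<in>connected_components_of (mtopology_of mX).
            \<exists>\<delta>\<in>carrier D. \<psi> \<delta> ` K1 = K2)"
    apply (rule exI[of _ F], rule exI[of _ pi], rule exI[of _ h], rule exI[of _ Qt])
    using pi_hom Dp_eq F_finite quot_q qeq h_homeo hq h_conj Pc comps_card comps_trans by auto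
qed

end

theorem theorem4p1:
  fixes G :: "'g monoid" and D :: "'d monoid"
    and mY :: "'y metric" and mX :: "'x metric"
    and \<phi> :: "'g \<Rightarrow> 'y \<Rightarrow> 'y" and \<psi> :: "'d \<Rightarrow> 'x \<Rightarrow> 'x"
    and SG :: "'g set" and SD :: "'d set"
    and f :: "'y \<Rightarrow> 'x"
    and I :: "'i set" and t \<tau> :: "'i \<Rightarrow> real" and C A :: real
  assumes G: "group G" and D: "group D"
    and SG: "fin_sym_gen_set G SG" and SD: "fin_sym_gen_set D SD"
    and Ycomp: "compact_space (mtopology_of mY)"
    and Xcomp: "compact_space (mtopology_of mX)"
    and Yconn: "connected_space (mtopology_of mY)"
    and actY: "continuous_action G mY \<phi>"
    and actX: "continuous_action D mX \<psi>"
    and free_orbit: "\<exists>y\<in>mspace mY. free_point G \<phi> y"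
    and free_act: "\<forall>x\<in>mspace mX. free_point D \<psi> x"
    and f_cont: "continuous_map (mtopology_of mY) (mtopology_of mX) f"
    and t_surj: "t ` I = {0<..}" and \<tau>_surj: "\<tau> ` I = {0<..}"
    and C: "C \<ge> 1" and A: "A \<ge> 0"
    and qi_lower: "\<forall>i\<in>I. \<forall>y\<in>mspace mY. \<forall>y'\<in>mspace mY.
        warped_dist mY \<phi> SG (t i) y y' / C - A
          \<le> warped_dist mX \<psi> SD (\<tau> i) (f y) (f y')"
    and qi_upper: "\<forall>i\<in>I. \<forall>y\<in>mspace mY. \<forall>y'\<in>mspace mY.
        warped_dist mX \<psi> SD (\<tau> i) (f y) (f y')
          \<le> C * warped_dist mY \<phi> SG (t i) y y' + A"
    and qi_dense: "\<forall>i\<in>I. \<forall>x\<in>mspace mX. \<exists>y\<in>mspace mY.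
        warped_dist mX \<psi> SD (\<tau> i) (f y) x \<le> A"
  defines "D' \<equiv> {\<delta> \<in> carrier D. \<psi> \<delta> ` (f ` mspace mY) = f ` mspace mY}"
  shows "finite (rcosets\<^bsub>D\<^esub> D') \<and>
    (\<exists>(F :: 'g set) (\<pi> :: 'g \<Rightarrow> 'd) (h :: 'x \<Rightarrow> 'y set) (Q :: 'y set topology).
       \<comment> \<open>(1) short exact sequence 1 -> F -> G -> D' -> 1 with F finite\<close>
       \<pi> \<in> hom G D \<and> \<pi> ` carrier G = D' \<and> F = kernel G D \<pi> \<and> finite F \<and>
       \<comment> \<open>(2) Q is the quotient topology on Y/F, h : im f -> Y/F homeomorphism,
            q = h o f, and h conjugates D' on im f with G/F on Y/F\<close>
       quotient_map (mtopology_of mY) Q (\<lambda>y. {\<phi> g y | g. g \<in> F}) \<and>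
       homeomorphic_map (subtopology (mtopology_of mX) (f ` mspace mY)) Q h \<and>
       (\<forall>y\<in>mspace mY. h (f y) = {\<phi> g y | g. g \<in> F}) \<and>
       (\<forall>\<gamma>\<in>carrier G. \<forall>x\<in>f ` mspace mY. h (\<psi> (\<pi> \<gamma>) x) = \<phi> \<gamma> ` h x) \<and>
       \<comment> \<open>(3) connected components\<close>
       f ` mspace mY \<in> connected_components_of (mtopology_of mX) \<and>
       card (connected_components_of (mtopology_of mX)) = card (rcosets\<^bsub>D\<^esub> D') \<and>
       (\<forall>K1\<in>connected_components_of (mtopology_of mX).
          \<forall>K2\<in>connected_components_of (mtopology_of mX).
            \<exists>\<delta>\<in>carrier D. \<psi> \<delta> ` K1 = K2)) \<and>
    \<comment> \<open>in particular\<close>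
    (homeomorphic_map (mtopology_of mY) (mtopology_of mX) f \<longrightarrow>
       (\<exists>\<pi>. \<pi> \<in> iso G D \<and>
          (\<forall>\<gamma>\<in>carrier G. \<forall>y\<in>mspace mY. f (\<phi> \<gamma> y) = \<psi> (\<pi> \<gamma>) (f y))))"
  proof -
  interpret M: mctx G D mY mX \<phi> \<psi> SG SD f I t \<tau> C A
    by (rule mctx.intro[OF G D SG SD Ycomp Xcomp Yconn actY actX free_orbit free_act f_cont t_surj \<tau>_surj C A qi_lower qi_upper qi_dense])
  show ?thesis unfolding D'_def by (rule M.main)
qed

end
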